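(* Let $W_1$ and $W_2$ be wedges in the hyperbolic plane sharing a common boundary geodesic $g_2$, with their vertices at the two opposite ideal endpoints of $g_2$; let $g_1$ and $g_3$ be the other boundary geodesics of $W_1$ and $W_2$ respectively. Orient $g_2$ so that $g_1$ lies on its left, and let $s(g_2)$ be the shear along $g_2$ of the ideal quadrilateral whose vertices are the endpoints of $g_1$ and $g_3$. Let $h_1$ be a horocyclic arc in $W_1$ orthogonal to and connecting its two boundary sides, and let $h_2$ be the horocyclic arc in $W_2$ orthogonal to its boundary sides that continues $h_1$ (starting at the endpoint of $h_1$ on $g_2$). If $(W_1,W_2)$ is left-open then $\ell(h_2)=\dfrac{e^{s(g_2)}}{\ell(h_1)}$; if $(W_1,W_2)$ is left-closed then $\ell(h_2)=\dfrac{e^{-s(g_2)}}{\ell(h_1)}$.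
   Context: A wedge is the region between two geodesics sharing one ideal endpoint (its vertex); horocyclic arcs in a wedge lie on horocycles centered at its vertex. With $g_2$ oriented so that $g_1$ is on its left, the pair $(W_1,W_2)$ is left-open if $g_2$ shares its initial point with $g_1$ (and its terminal point with $g_3$), and left-closed if $g_2$ shares its initial point with $g_3$ (and its terminal point with $g_1$). Shear: for two ideal triangles $\Delta_1,\Delta_2$ sharing a side $g$, orient $g$ with $\Delta_1$ on its left; $s(g)$ is the signed distance along $g$ from the foot of the perpendicular from the third vertex of $\Delta_1$ to the foot of the perpendicular from the third vertex of $\Delta_2$. $\ell(\cdot)$ denotes hyperbolic length. *)

theory Defs
  imports "HOL-Analysis.Analysis"
begin

text \<open>Poincare disk model of the hyperbolic plane: points are complex numbers z with
  cmod z < 1; ideal points are complex numbers of modulus 1.\<close>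

definition hdist :: "complex \<Rightarrow> complex \<Rightarrow> real" where
  "hdist z w = arcosh (1 + 2 * (cmod (z - w))\<^sup>2 / ((1 - (cmod z)\<^sup>2) * (1 - (cmod w)\<^sup>2)))"

definition hyp_geodesic :: "complex \<Rightarrow> complex \<Rightarrow> (real \<Rightarrow> complex) \<Rightarrow> bool" where
  "hyp_geodesic p q c \<longleftrightarrow> cmod p = 1 \<and> cmod q = 1 \<and> (\<forall>t. cmod (c t) < 1) \<and>
     (\<forall>s t. hdist (c s) (c t) = \<bar>s - t\<bar>) \<and> (c \<longlongrightarrow> q) at_top \<and> (c \<longlongrightarrow> p) at_bot"

definition geod :: "complex \<Rightarrow> complex \<Rightarrow> complex set" where
  "geod p q = {z. \<exists>c t. hyp_geodesic p q c \<and> z = c t}"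

text \<open>Horocycle centred at the ideal point p: a Euclidean circle of radius r in the disk
  internally tangent to the unit circle at p (with p itself removed).\<close>
definition horocycle :: "complex \<Rightarrow> real \<Rightarrow> complex set" where
  "horocycle p r = {z. cmod z < 1 \<and> cmod (z - complex_of_real (1 - r) * p) = r}"

definition hyp_length :: "(real \<Rightarrow> complex) \<Rightarrow> real" where
  "hyp_length \<gamma> = integral {0..1}
     (\<lambda>t. 2 * norm (vector_derivative \<gamma> (at t)) / (1 - (cmod (\<gamma> t))\<^sup>2))"

text \<open>u, v, w (distinct points of the unit circle) are in counterclockwise cyclic order.\<close>
definition ccw :: "complex \<Rightarrow> complex \<Rightarrow> complex \<Rightarrow> bool" where
  "ccw u v w \<longleftrightarrow> Im (cnj (v - u) * (w - u)) > 0"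

text \<open>The ideal point a lies on the left of the geodesic oriented from p to q
  (standard orientation of the plane).\<close>
definition ideal_left :: "complex \<Rightarrow> complex \<Rightarrow> complex \<Rightarrow> bool" where
  "ideal_left p q a \<longleftrightarrow> ccw q a p"

text \<open>c t is the foot of the perpendicular dropped from the ideal point a to the
  geodesic line c: some geodesic line emanating from a passes through c t
  orthogonally to c (the disk model is conformal).\<close>
definition perp_foot :: "complex \<Rightarrow> (real \<Rightarrow> complex) \<Rightarrow> real \<Rightarrow> bool" where
  "perp_foot a c t \<longleftrightarrow> (\<exists>e c' u v. hyp_geodesic a e c' \<and> c' 0 = c t \<and>
      (c has_vector_derivative u) (at t) \<and> (c' has_vector_derivative v) (at 0) \<and>
      u \<noteq> 0 \<and> v \<noteq> 0 \<and> Re (cnj u * v) = 0)"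

definition signed_foot_dist :: "complex \<Rightarrow> complex \<Rightarrow> complex \<Rightarrow> complex \<Rightarrow> real" where
  "signed_foot_dist p q a b = (THE s. \<exists>c t1 t2. hyp_geodesic p q c \<and>
      perp_foot a c t1 \<and> perp_foot b c t2 \<and> s = t2 - t1)"

text \<open>Shear along the geodesic g with endpoints x, y of the ideal triangles
  Delta1 = (x, y, a) and Delta2 = (x, y, b): g is oriented with Delta1 on its left.\<close>
definition shear :: "complex \<Rightarrow> complex \<Rightarrow> complex \<Rightarrow> complex \<Rightarrow> real" where
  "shear x y a b = (if ideal_left x y a then signed_foot_dist x y a b
                    else signed_foot_dist y x a b)"

end

theory Submission
  imports Defs "HOL-Real_Asymp.Real_Asymp"
begin


definition kk :: "complex \<Rightarrow> complex \<Rightarrow> complex" where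
  "kk p q = \<i> * (1 - q * cnj p) / 2"
definition Phi :: "complex \<Rightarrow> complex \<Rightarrow> complex \<Rightarrow> complex" where
  "Phi p q z = kk p q * (z - p) / (q - z)"
definition Psi :: "complex \<Rightarrow> complex \<Rightarrow> complex \<Rightarrow> complex" where
  "Psi p q w = (q * w + p * kk p q) / (w + kk p q)"
definition dH :: "complex \<Rightarrow> complex \<Rightarrow> real" where
  "dH w1 w2 = arcosh (1 + (cmod (w1 - w2))\<^sup>2 / (2 * Im w1 * Im w2))"

lemma unit_cnj: "cmod p = 1 \<Longrightarrow> p * cnj p = 1"
  by (metis complex_norm_square of_real_1 power_one)

lemma Im_cnj: "complex_of_real (Im x) = (x - cnj x) / (2*\<i>)"
  by (simp add: complex_eq_iff)

lemma Re_cnj: "complex_of_real (Re x) = (x + cnj x) / 2"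
  by (simp add: complex_eq_iff)

lemma cmod_sq: "(complex_of_real (cmod x))\<^sup>2 = x * cnj x"
  by (metis complex_norm_square of_real_power)

lemma kk_alt: "cmod p = 1 \<Longrightarrow> kk p q = \<i> * cnj p * (p - q) / 2"
  unfolding kk_def using unit_cnj[of p] by (simp add: algebra_simps)

lemma kk_cnj: "cmod q = 1 \<Longrightarrow> cnj (kk p q) = - \<i> * cnj q * (q - p) / 2"
  unfolding kk_def using unit_cnj[of q] by (simp add: algebra_simps)

lemma norm_kk: "cmod p = 1 \<Longrightarrow> cmod (kk p q) = cmod (q - p) / 2"
  by (simp add: kk_alt norm_mult norm_divide norm_minus_commute complex_mod_cnj)

lemma kk_nz: "cmod p = 1 \<Longrightarrow> p \<noteq> q \<Longrightarrow> kk p q \<noteq> 0"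
  using norm_kk[of p q] by auto

lemma Im_kk: assumes "cmod p = 1" "cmod q = 1" shows "Im (kk p q) = (cmod (q - p))\<^sup>2 / 4"
proof -
  have "complex_of_real (Im (kk p q)) = (kk p q - cnj (kk p q)) / (2*\<i>)" by (rule Im_cnj)
  also have "\<dots> = (\<i> * cnj p * (p - q) / 2 - (- \<i> * cnj q * (q - p) / 2)) / (2*\<i>)"
    using kk_alt[OF assms(1)] kk_cnj[OF assms(2)] by simp
  also have "\<dots> = (q - p) * cnj (q - p) / 4"
    using unit_cnj[OF assms(1)] unit_cnj[OF assms(2)] by (simp add: field_simps)
  also have "\<dots> = complex_of_real ((cmod (q - p))\<^sup>2 / 4)"
    by (simp add: cmod_sq)
  finally show ?thesis by (simp only: of_real_eq_iff)
qed

lemma alg_Im: fixes p q w P Q W :: complex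
  assumes "p*P = 1" "q*Q=1" "w \<noteq> 0" "W \<noteq> 0"
  shows "(\<i>*P*(p-q)/2*(q-w-p)/w - (-\<i>*Q*(q-p)/2)*(Q-W-P)/W)/(2*\<i>) = (q-p)*(Q-P)*(1-(q-w)*(Q-W))/(4*w*W)"
  using assms by (simp add: field_simps) algebra

lemma Phi_Im: assumes "cmod p = 1" "cmod q = 1" "z \<noteq> q"
  shows "Im (Phi p q z) = (cmod (q - p))\<^sup>2 * (1 - (cmod z)\<^sup>2) / (4 * (cmod (q - z))\<^sup>2)"
proof -
  have w: "q - z \<noteq> 0" "cnj (q - z) \<noteq> 0" using assms by auto
  have "complex_of_real (Im (Phi p q z)) = (Phi p q z - cnj (Phi p q z)) / (2*\<i>)" by (rule Im_cnj)
  also have "\<dots> = (\<i>*cnj p*(p-q)/2*(q-(q-z)-p)/(q-z) - (-\<i>*cnj q*(q-p)/2)*(cnj q-cnj (q-z)-cnj p)/cnj (q-z))/(2*\<i>)"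
    apply (simp add: Phi_def kk_alt[OF assms(1)] kk_cnj[OF assms(2)])
    apply (rule disjI2, rule disjI2)
    using unit_cnj[OF assms(1)] unit_cnj[OF assms(2)] by algebra
  also have "\<dots> = (q-p)*(cnj q-cnj p)*(1-(q-(q-z))*(cnj q-cnj (q-z)))/(4*(q-z)*cnj (q-z))"
    by (rule alg_Im) (use unit_cnj[OF assms(1)] unit_cnj[OF assms(2)] w in auto)
  also have "\<dots> = complex_of_real ((cmod (q - p))\<^sup>2 * (1 - (cmod z)\<^sup>2) / (4 * (cmod (q - z))\<^sup>2))"
    by (simp add: cmod_sq)
  finally show ?thesis by (simp only: of_real_eq_iff)
qed

lemma Phi_diff: assumes "z1 \<noteq> q" "z2 \<noteq> q"
  shows "Phi p q z1 - Phi p q z2 = kk p q * (q - p) * (z1 - z2) / ((q - z1) * (q - z2))"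
proof -
  have "q - z1 \<noteq> 0" "q - z2 \<noteq> 0" using assms by auto
  then show ?thesis unfolding Phi_def by (simp add: field_simps)
qed

lemma Phi_diff_norm: assumes "cmod p = 1" "z1 \<noteq> q" "z2 \<noteq> q"
  shows "cmod (Phi p q z1 - Phi p q z2) = (cmod (q - p))\<^sup>2 * cmod (z1 - z2) / (2 * cmod (q - z1) * cmod (q - z2))"
  unfolding Phi_diff[OF assms(2,3)]
  by (simp add: norm_mult norm_divide power2_eq_square norm_kk[OF assms(1)])


lemma frac_cancel3: fixes a b c w :: complex shows "a \<noteq> 0 \<Longrightarrow> b \<noteq> 0 \<Longrightarrow> c \<noteq> 0 \<Longrightarrow> a * (w * b / c) / (a * b / c) = w"
  by (simp add: field_simps)

lemma Psi_Phi: assumes "cmod p = 1" "p \<noteq> q" "z \<noteq> q" shows "Psi p q (Phi p q z) = z"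
proof -
  have k: "kk p q \<noteq> 0" using kk_nz assms by auto
  have a: "q - z \<noteq> 0" "q - p \<noteq> 0" using assms by auto
  have e1: "Phi p q z + kk p q = kk p q * (q - p) / (q - z)"
    unfolding Phi_def using a by (simp add: field_simps)
  have e2: "q * Phi p q z + p * kk p q = kk p q * (z * (q - p) / (q - z))"
    unfolding Phi_def using a by (simp add: field_simps)
  show ?thesis unfolding Psi_def e1 e2 using k a by (intro frac_cancel3) auto
qed

lemma Psi_minus_p: "w + kk p q \<noteq> 0 \<Longrightarrow> Psi p q w - p = w * (q - p) / (w + kk p q)"
  unfolding Psi_def by (simp add: field_simps)

lemma q_minus_Psi: "w + kk p q \<noteq> 0 \<Longrightarrow> q - Psi p q w = kk p q * (q - p) / (w + kk p q)"
  unfolding Psi_def by (simp add: field_simps)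

lemma Psi_ne_q: assumes "cmod p = 1" "p \<noteq> q" "w + kk p q \<noteq> 0" shows "Psi p q w \<noteq> q"
  using q_minus_Psi[OF assms(3)] kk_nz[OF assms(1,2)] assms(2,3) by auto

lemma Phi_Psi: assumes "cmod p = 1" "p \<noteq> q" "w + kk p q \<noteq> 0" shows "Phi p q (Psi p q w) = w"
proof -
  have k: "kk p q \<noteq> 0" using kk_nz assms by auto
  show ?thesis unfolding Phi_def
    unfolding Psi_minus_p[OF assms(3)] q_minus_Psi[OF assms(3)]
    using k assms by (intro frac_cancel3) auto
qed

lemma Im_kk_pos: "cmod p = 1 \<Longrightarrow> cmod q = 1 \<Longrightarrow> p \<noteq> q \<Longrightarrow> Im (kk p q) > 0"
proof -
  assume a: "cmod p = 1" "cmod q = 1" "p \<noteq> q"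
  then have "(cmod (q - p))\<^sup>2 > 0" by simp
  then show ?thesis using Im_kk[OF a(1,2)] by linarith
qed

lemma w_kk_nz: assumes "cmod p = 1" "cmod q = 1" "p \<noteq> q" "Im w \<ge> 0" shows "w + kk p q \<noteq> 0"
proof
  assume "w + kk p q = 0"
  then have "Im w + Im (kk p q) = 0" by (metis plus_complex.sel(2) zero_complex.sel(2))
  then show False using Im_kk_pos[OF assms(1-3)] assms(4) by linarith
qed


lemma Phi_Im_pos: assumes "cmod p = 1" "cmod q = 1" "p \<noteq> q" "cmod z < 1" shows "Im (Phi p q z) > 0"
proof -
  have zq: "z \<noteq> q" using assms by auto
  have "(cmod (q - p))\<^sup>2 > 0" "(cmod (q - z))\<^sup>2 > 0" using assms zq by auto
  moreover have "1 - (cmod z)\<^sup>2 > 0" using assms(4) by (simp add: abs_square_less_1)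
  ultimately show ?thesis unfolding Phi_Im[OF assms(1,2) zq] by simp
qed

lemma Psi_disk: assumes "cmod p = 1" "cmod q = 1" "p \<noteq> q" "Im w > 0" shows "cmod (Psi p q w) < 1"
proof -
  have wk: "w + kk p q \<noteq> 0" using w_kk_nz assms by auto
  let ?z = "Psi p q w"
  have zq: "?z \<noteq> q" using Psi_ne_q assms wk by auto
  have "Im w = (cmod (q - p))\<^sup>2 * (1 - (cmod ?z)\<^sup>2) / (4 * (cmod (q - ?z))\<^sup>2)"
    using Phi_Im[OF assms(1,2) zq] Phi_Psi[OF assms(1,3) wk] by simp
  with assms(4) have "(cmod (q - p))\<^sup>2 * (1 - (cmod ?z)\<^sup>2) / (4 * (cmod (q - ?z))\<^sup>2) > 0" by simp
  moreover have "(cmod (q - p))\<^sup>2 > 0" "(cmod (q - ?z))\<^sup>2 > 0" using assms zq by auto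
  ultimately have "1 - (cmod ?z)\<^sup>2 > 0" by (simp add: zero_less_divide_iff zero_less_mult_iff)
  then show ?thesis by (simp add: abs_square_less_1)
qed

lemma Psi_circle: assumes "cmod p = 1" "cmod q = 1" "p \<noteq> q" "Im w = 0" shows "cmod (Psi p q w) = 1"
proof -
  have wk: "w + kk p q \<noteq> 0" using w_kk_nz assms by auto
  let ?z = "Psi p q w"
  have zq: "?z \<noteq> q" using Psi_ne_q assms wk by auto
  have "Im w = (cmod (q - p))\<^sup>2 * (1 - (cmod ?z)\<^sup>2) / (4 * (cmod (q - ?z))\<^sup>2)"
    using Phi_Im[OF assms(1,2) zq] Phi_Psi[OF assms(1,3) wk] by simp
  with assms(4) have "(cmod (q - p))\<^sup>2 * (1 - (cmod ?z)\<^sup>2) / (4 * (cmod (q - ?z))\<^sup>2) = 0" by simp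
  moreover have "(cmod (q - p))\<^sup>2 > 0" "(cmod (q - ?z))\<^sup>2 > 0" using assms zq by auto
  ultimately have "1 - (cmod ?z)\<^sup>2 = 0" by simp
  then have "(cmod ?z)\<^sup>2 = 1\<^sup>2" by simp
  then show ?thesis by (rule power2_eq_imp_eq) simp_all
qed

lemma Phi_circle_real: assumes "cmod p = 1" "cmod q = 1" "cmod a = 1" "a \<noteq> q" shows "Im (Phi p q a) = 0"
  using Phi_Im[OF assms(1,2,4)] assms(3) by simp

lemma hdist_alg: fixes A B1 B2 D R1 R2 :: real
  assumes "A > 0" "B1 > 0" "B2 > 0" "R1 > 0" "R2 > 0"
  shows "2 * D\<^sup>2 / (R1 * R2) = (A\<^sup>2 * D / (2 * B1 * B2))\<^sup>2 / (2 * (A\<^sup>2 * R1 / (4 * B1\<^sup>2)) * (A\<^sup>2 * R2 / (4 * B2\<^sup>2)))"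
  using assms by (simp add: field_simps power2_eq_square)

lemma hdist_Phi: assumes "cmod p = 1" "cmod q = 1" "p \<noteq> q" "cmod z1 < 1" "cmod z2 < 1"
  shows "hdist z1 z2 = dH (Phi p q z1) (Phi p q z2)"
proof -
  have zq: "z1 \<noteq> q" "z2 \<noteq> q" using assms by auto
  have c: "cmod (q - p) > 0" "cmod (q - z1) > 0" "cmod (q - z2) > 0" using assms zq by auto
  have r: "1 - (cmod z1)\<^sup>2 > 0" "1 - (cmod z2)\<^sup>2 > 0" using assms(4,5) by (simp_all add: abs_square_less_1)
  have "2 * (cmod (z1 - z2))\<^sup>2 / ((1 - (cmod z1)\<^sup>2) * (1 - (cmod z2)\<^sup>2)) =
        (cmod (Phi p q z1 - Phi p q z2))\<^sup>2 / (2 * Im (Phi p q z1) * Im (Phi p q z2))"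
    unfolding Phi_diff_norm[OF assms(1) zq] Phi_Im[OF assms(1,2) zq(1)] Phi_Im[OF assms(1,2) zq(2)]
    using c r by (intro hdist_alg) auto
  then show ?thesis unfolding hdist_def dH_def by simp
qed

lemma Phi_p: "Phi p q p = 0" unfolding Phi_def by simp

lemma Phi_swap: assumes "cmod p = 1" "cmod q = 1" "z \<noteq> p" "z \<noteq> q"
  shows "Phi q p z * Phi p q z = - complex_of_real ((cmod (q - p))\<^sup>2) / 4"
proof -
  have a: "p - z \<noteq> 0" "q - z \<noteq> 0" using assms by auto
  have g: "\<And>A B x y :: complex. x \<noteq> 0 \<Longrightarrow> y \<noteq> 0 \<Longrightarrow> A * (-y) / x * (B * (-x) / y) = A * B"
    by (simp add: field_simps)
  have e: "z - q = -(q - z)" "z - p = -(p - z)" by simp_all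
  have "Phi q p z * Phi p q z = kk q p * (-(q - z)) / (p - z) * (kk p q * (-(p - z)) / (q - z))"
    unfolding Phi_def by simp
  also have "\<dots> = kk q p * kk p q" by (rule g) (use a in auto)
  also have "\<dots> = (\<i> * cnj q * (q - p) / 2) * (\<i> * cnj p * (p - q) / 2)"
    by (simp add: kk_alt assms(1,2))
  also have "\<dots> = - ((q - p) * (cnj q - cnj p)) / 4"
    using unit_cnj[OF assms(1)] unit_cnj[OF assms(2)] by (simp add: field_simps) algebra
  also have "\<dots> = - complex_of_real ((cmod (q - p))\<^sup>2) / 4"
    by (simp add: cmod_sq)
  finally show ?thesis .
qed



definition uhp_geo :: "(real \<Rightarrow> complex) \<Rightarrow> bool" where
  "uhp_geo g \<longleftrightarrow> (\<forall>t. Im (g t) > 0) \<and> (\<forall>s t. dH (g s) (g t) = \<bar>s - t\<bar>)"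

lemma cosh_exp: "cosh (x::real) = (exp x + exp (- x)) / 2"
  by (simp add: cosh_def)

lemma uhp_E: assumes "uhp_geo g"
  shows "(cmod (g s - g t))\<^sup>2 = 2 * Im (g s) * Im (g t) * (cosh (s - t) - 1)"
proof -
  have pos: "Im (g s) > 0" "Im (g t) > 0" using assms unfolding uhp_geo_def by auto
  let ?X = "(cmod (g s - g t))\<^sup>2 / (2 * Im (g s) * Im (g t))"
  have X0: "?X \<ge> 0" using pos by simp
  have "arcosh (1 + ?X) = \<bar>s - t\<bar>" using assms unfolding uhp_geo_def dH_def by auto
  then have "cosh (arcosh (1 + ?X)) = cosh \<bar>s - t\<bar>" by simp
  then have "1 + ?X = cosh (s - t)" using X0 by simp
  then show ?thesis using pos by (simp add: field_simps)
qed

lemma uhp_ne: assumes "uhp_geo g" "s \<noteq> t" shows "g s \<noteq> g t"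
proof
  assume "g s = g t"
  then have "2 * Im (g s) * Im (g t) * (cosh (s - t) - 1) = 0" using uhp_E[OF assms(1), of s t] by simp
  moreover have "Im (g s) > 0" "Im (g t) > 0" using assms unfolding uhp_geo_def by auto
  moreover have "cosh (s - t) > 1" using assms(2) cosh_real_ge_1[of "s - t"] cosh_real_one_iff[of "s - t"] by linarith
  ultimately show False by simp
qed

lemma uhp_top_limit: assumes "uhp_geo g" "filterlim g at_infinity at_top"
  shows "((\<lambda>u. (cmod (g u))\<^sup>2 / (exp u * Im (g u))) \<longlongrightarrow> Im (g t) * exp (- t)) at_top"
proof -
  have pos: "\<And>u. Im (g u) > 0" using assms unfolding uhp_geo_def by auto
  have nz: "\<And>u. g u \<noteq> 0" using pos by (metis zero_complex.sel(2) less_irrefl)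
  define G where "G u = Im (g t) * (exp (- t) + exp (t - 2 * u) - 2 * exp (- u))" for u
  define H where "H u = 1 / (cmod (g t / g u - 1))\<^sup>2" for u
  have l1: "((\<lambda>u. exp (t - 2 * u)) \<longlongrightarrow> 0) at_top" by real_asymp
  have l2: "((\<lambda>u::real. exp (- u)) \<longlongrightarrow> 0) at_top" by real_asymp
  have G: "(G \<longlongrightarrow> Im (g t) * (exp (- t) + 0 - 2 * 0)) at_top"
    unfolding G_def by (intro tendsto_intros l1 l2)
  have q0: "((\<lambda>u. g t / g u) \<longlongrightarrow> 0) at_top"
    by (rule tendsto_divide_0[OF tendsto_const assms(2)])
  have H: "(H \<longlongrightarrow> 1 / (cmod (0 - 1))\<^sup>2) at_top"
    unfolding H_def by (intro tendsto_intros q0) auto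
  have "((\<lambda>u. G u * H u) \<longlongrightarrow> Im (g t) * (exp (- t) + 0 - 2 * 0) * (1 / (cmod (0 - 1))\<^sup>2)) at_top"
    by (rule tendsto_mult[OF G H])
  then have GH: "((\<lambda>u. G u * H u) \<longlongrightarrow> Im (g t) * exp (- t)) at_top" by simp
  have ev: "eventually (\<lambda>u. G u * H u = (cmod (g u))\<^sup>2 / (exp u * Im (g u))) at_top"
    using eventually_gt_at_top[of t]
  proof eventually_elim
    case (elim u)
    have ne: "g t - g u \<noteq> 0" using uhp_ne[OF assms(1), of t u] elim by auto
    have E: "(cmod (g t - g u))\<^sup>2 = 2 * Im (g t) * Im (g u) * (cosh (t - u) - 1)" by (rule uhp_E[OF assms(1)])
    have d: "g t / g u - 1 = (g t - g u) / g u" using nz[of u] by (simp add: field_simps)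
    have Hu: "H u = (cmod (g u))\<^sup>2 / (cmod (g t - g u))\<^sup>2"
      unfolding H_def d by (simp add: norm_divide power_divide)
    have f1: "exp (- t) * exp u = exp (u - t)" by (simp add: mult_exp_exp)
    have f2: "exp (t - 2*u) * exp u = exp (t - u)" by (simp add: mult_exp_exp)
    have f3: "exp (- u) * exp u = 1" by (simp add: mult_exp_exp)
    have "G u * (exp u * Im (g u)) = Im (g t) * Im (g u) * (exp (- t) * exp u + exp (t - 2*u) * exp u - 2 * (exp (- u) * exp u))"
      unfolding G_def by (simp add: algebra_simps)
    also have "\<dots> = Im (g t) * Im (g u) * (exp (u - t) + exp (t - u) - 2)" unfolding f1 f2 f3 by simp
    also have "\<dots> = (cmod (g t - g u))\<^sup>2" unfolding E cosh_exp by (simp add: algebra_simps)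
    finally have Gu: "G u = (cmod (g t - g u))\<^sup>2 / (exp u * Im (g u))"
      using pos[of u] by (simp add: eq_divide_eq)
    show ?case unfolding Hu Gu using ne pos[of u] by (simp add: field_simps)
  qed
  show ?thesis using tendsto_cong[OF ev] GH by simp
qed


lemma uhp_top: assumes "uhp_geo g" "filterlim g at_infinity at_top"
  shows "Im (g t) = Im (g 0) * exp t"
proof -
  have "Im (g t) * exp (- t) = Im (g 0) * exp (- 0)"
    using tendsto_unique[OF _ uhp_top_limit[OF assms, of t] uhp_top_limit[OF assms, of 0]] by simp
  then show ?thesis by (simp add: exp_minus field_simps)
qed

lemma uhp_rev: assumes "uhp_geo g" shows "uhp_geo (\<lambda>t. g (- t))"
  using assms unfolding uhp_geo_def by (simp add: abs_minus_commute)

lemma uhp_shift: assumes "uhp_geo g" shows "uhp_geo (\<lambda>t. g t - of_real X)"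
  using assms unfolding uhp_geo_def dH_def by simp

lemma Im_inv: "Im (-1/w) = Im w / (cmod w)\<^sup>2"
  by (simp add: Im_divide cmod_power2)

lemma dH_inv: assumes "Im w1 > 0" "Im w2 > 0" shows "dH (-1/w1) (-1/w2) = dH w1 w2"
proof -
  have nz: "w1 \<noteq> 0" "w2 \<noteq> 0" using assms by auto
  have n: "cmod w1 > 0" "cmod w2 > 0" using nz by auto
  have i1: "Im (-1/w1) = Im w1 / (cmod w1)\<^sup>2" by (rule Im_inv)
  have i2: "Im (-1/w2) = Im w2 / (cmod w2)\<^sup>2" by (rule Im_inv)
  have d: "-1/w1 - -1/w2 = (w1 - w2) / (w1 * w2)" using nz by (simp add: field_simps)
  have "(cmod (-1/w1 - -1/w2))\<^sup>2 / (2 * Im (-1/w1) * Im (-1/w2)) = (cmod (w1 - w2))\<^sup>2 / (2 * Im w1 * Im w2)"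
    unfolding i1 i2 d using n assms by (simp add: norm_divide norm_mult power_divide power_mult_distrib field_simps)
  then show ?thesis unfolding dH_def by simp
qed

lemma uhp_nz: "uhp_geo g \<Longrightarrow> g t \<noteq> 0"
  unfolding uhp_geo_def by (metis zero_complex.sel(2) less_irrefl)

lemma uhp_inv: assumes "uhp_geo g" shows "uhp_geo (\<lambda>t. -1 / g t)"
proof -
  have pos: "\<And>t. Im (g t) > 0" using assms unfolding uhp_geo_def by auto
  then have "\<And>t. g t \<noteq> 0" by (metis zero_complex.sel(2) less_irrefl)
  then have "\<And>t. Im (-1 / g t) > 0"
  proof -
    fix t
    have "Im (-1/g t) = Im (g t)/(cmod (g t))\<^sup>2" by (rule Im_inv)
    moreover have "Im (g t)/(cmod (g t))\<^sup>2 > 0" using pos[of t] uhp_nz[OF assms, of t] by simp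
    ultimately show "Im (-1/g t) > 0" by simp
  qed
  moreover have "\<And>s t. dH (-1 / g s) (-1 / g t) = \<bar>s - t\<bar>"
    using dH_inv pos assms unfolding uhp_geo_def by simp
  ultimately show ?thesis unfolding uhp_geo_def by simp
qed

lemma uhp_main: assumes "uhp_geo g" "filterlim g at_infinity at_top" "(g \<longlongrightarrow> 0) at_bot"
  shows "g t = \<i> * of_real (Im (g 0) * exp t)"
proof -
  have pos: "\<And>t. Im (g t) > 0" using assms unfolding uhp_geo_def by auto
  have nz: "\<And>t. g t \<noteq> 0" using uhp_nz[OF assms(1)] .
  define \<alpha> where "\<alpha> = Im (g 0)"
  have a: "\<And>t. Im (g t) = \<alpha> * exp t" unfolding \<alpha>_def by (rule uhp_top[OF assms(1,2)])
  define d where "d t = -1 / g (- t)" for t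
  have dg: "uhp_geo d" unfolding d_def using uhp_inv[OF uhp_rev[OF assms(1)]] by simp
  have g0: "((\<lambda>t. g (- t)) \<longlongrightarrow> 0) at_top" using assms(3) by (simp add: filterlim_at_bot_mirror)
  have fl: "filterlim (\<lambda>t. - g (- t)) (at 0) at_top"
    by (rule filterlim_atI) (use tendsto_minus[OF g0] nz in auto)
  have "filterlim (\<lambda>t. inverse (- g (- t))) at_infinity at_top"
    by (rule filterlim_compose[OF filterlim_inverse_at_infinity fl])
  then have dinf: "filterlim d at_infinity at_top" unfolding d_def by (simp add: divide_inverse)
  define \<beta> where "\<beta> = Im (d 0)"
  have b: "\<And>t. Im (d t) = \<beta> * exp t" unfolding \<beta>_def by (rule uhp_top[OF dg dinf])
  have b': "Im (g s) / (cmod (g s))\<^sup>2 = \<beta> * exp (- s)" for s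
  proof -
    have "Im (d (-s)) = \<beta> * exp (-s)" by (rule b)
    moreover have "d (-s) = -1 / g s" unfolding d_def by simp
    ultimately show ?thesis using Im_inv[of "g s"] by metis
  qed
  have bpos: "\<beta> > 0"
  proof -
    have "(cmod (g 0))\<^sup>2 > 0" using nz[of 0] by simp
    then have "Im (g 0) / (cmod (g 0))\<^sup>2 > 0" using pos[of 0] by simp
    then show ?thesis using b'[of 0] by simp
  qed
  have apos: "\<alpha> > 0" using pos[of 0] unfolding \<alpha>_def by simp
  have re: "Re (g s) = Re (g 0)" for s
  proof -
    have E: "(cmod (g s - g 0))\<^sup>2 = 2 * Im (g s) * Im (g 0) * (cosh (s - 0) - 1)" by (rule uhp_E[OF assms(1)])
    have "(cmod (g s - g 0))\<^sup>2 = (Re (g s) - Re (g 0))\<^sup>2 + (Im (g s) - Im (g 0))\<^sup>2"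
      by (simp add: cmod_power2)
    moreover have "2 * Im (g s) * Im (g 0) * (cosh (s - 0) - 1) = (Im (g s) - Im (g 0))\<^sup>2"
      unfolding a cosh_exp by (simp add: power2_eq_square field_simps exp_minus)
    ultimately have "(Re (g s) - Re (g 0))\<^sup>2 = 0" using E by simp
    then show ?thesis by simp
  qed
  define x where "x = Re (g 0)"
  have sq: "(cmod (g s))\<^sup>2 = x\<^sup>2 + (\<alpha> * exp s)\<^sup>2" for s
    using re[of s] a[of s] unfolding x_def by (simp add: cmod_power2)
  have key: "\<alpha> * exp s = \<beta> * exp (- s) * (x\<^sup>2 + (\<alpha> * exp s)\<^sup>2)" for s
  proof -
    have c: "(cmod (g s))\<^sup>2 \<noteq> 0" using nz[of s] by simp
    have "Im (g s) = \<beta> * exp (- s) * (cmod (g s))\<^sup>2" using b'[of s] c by (simp add: divide_eq_eq)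
    then show ?thesis by (simp only: a sq)
  qed
  have k0: "\<alpha> = \<beta> * (x\<^sup>2 + \<alpha>\<^sup>2)" using key[of 0] by simp
  have k1: "\<alpha> * exp 1 * exp 1 = \<beta> * (x\<^sup>2 + (\<alpha> * exp 1)\<^sup>2)"
    using key[of 1] by (simp add: exp_minus field_simps)
  have "\<beta> * x\<^sup>2 * (exp 1 * exp 1 - 1) = 0"
    using k0 k1 unfolding power2_eq_square by algebra
  moreover have "exp 1 * exp 1 - 1 \<noteq> (0::real)"
  proof -
    have "exp (1::real) > 1" by simp
    then have "exp 1 * exp 1 > (1::real)" by (metis less_1_mult)
    then show ?thesis by simp
  qed
  ultimately have "x = 0" using bpos by simp
  then show ?thesis using re[of t] a[of t] unfolding x_def \<alpha>_def
    by (simp add: complex_eq_iff)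
qed

lemma uhp_not_both: assumes "uhp_geo g" "filterlim g at_infinity at_top" "filterlim g at_infinity at_bot"
  shows False
proof -
  have a: "\<And>t. Im (g t) = Im (g 0) * exp t" by (rule uhp_top[OF assms(1,2)])
  have "filterlim (\<lambda>t. g (- t)) at_infinity at_top" using assms(3) by (simp add: filterlim_at_bot_mirror)
  then have b: "\<And>t. Im (g (- t)) = Im (g 0) * exp t" using uhp_top[OF uhp_rev[OF assms(1)]] by simp
  have pos: "Im (g 0) > 0" using assms unfolding uhp_geo_def by auto
  have "Im (g 0) * exp 1 = Im (g 0) * exp (- 1)" using a[of 1] b[of "-1"] by simp
  then have "exp (1::real) = exp (- 1)" using pos by simp
  then show False by simp
qed



lemma Phi_to_inf: assumes "cmod p = 1" "p \<noteq> q" "(c \<longlongrightarrow> q) F" "eventually (\<lambda>t. c t \<noteq> q) F"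
  shows "filterlim (\<lambda>t. Phi p q (c t)) at_infinity F"
proof -
  have a: "((\<lambda>t. q - c t) \<longlongrightarrow> 0) F" using tendsto_diff[OF tendsto_const[of q] assms(3)] by simp
  have b: "filterlim (\<lambda>t. q - c t) (at 0) F"
    by (rule filterlim_atI[OF a]) (use assms(4) in \<open>auto elim: eventually_mono\<close>)
  have c: "filterlim (\<lambda>t. inverse (q - c t)) at_infinity F"
    by (rule filterlim_compose[OF filterlim_inverse_at_infinity b])
  have d: "((\<lambda>t. kk p q * (c t - p)) \<longlongrightarrow> kk p q * (q - p)) F"
    by (intro tendsto_intros assms(3))
  have e: "kk p q * (q - p) \<noteq> 0" using kk_nz[OF assms(1,2)] assms(2) by simp
  have "filterlim (\<lambda>t. kk p q * (c t - p) * inverse (q - c t)) at_infinity F"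
    by (rule tendsto_mult_filterlim_at_infinity[OF d e c])
  then show ?thesis unfolding Phi_def by (simp add: divide_inverse)
qed

lemma Phi_lim: assumes "(c \<longlongrightarrow> x) F" "x \<noteq> q"
  shows "((\<lambda>t. Phi p q (c t)) \<longlongrightarrow> Phi p q x) F"
  unfolding Phi_def using assms by (intro tendsto_intros) auto

lemma geo_char: assumes "cmod p = 1" "cmod q = 1" "p \<noteq> q" "hyp_geodesic p q c"
  shows "\<exists>\<alpha>>0. \<forall>t. c t = Psi p q (\<i> * of_real (\<alpha> * exp t))"
proof -
  have disk: "\<And>t. cmod (c t) < 1" and iso: "\<And>s t. hdist (c s) (c t) = \<bar>s - t\<bar>"
    and top: "(c \<longlongrightarrow> q) at_top" and bot: "(c \<longlongrightarrow> p) at_bot"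
    using assms(4) unfolding hyp_geodesic_def by auto
  have cq: "c t \<noteq> q" for t
  proof
    assume "c t = q"
    then have "cmod (c t) = 1" using assms(2) by simp
    with disk[of t] show False by simp
  qed
  define g where "g t = Phi p q (c t)" for t
  have ug: "uhp_geo g" unfolding uhp_geo_def
  proof (intro conjI allI)
    fix t show "Im (g t) > 0" unfolding g_def by (rule Phi_Im_pos[OF assms(1-3) disk])
  next
    fix s t
    have "hdist (c s) (c t) = dH (g s) (g t)" unfolding g_def by (rule hdist_Phi[OF assms(1-3) disk disk])
    then show "dH (g s) (g t) = \<bar>s - t\<bar>" using iso[of s t] by simp
  qed
  have gi: "filterlim g at_infinity at_top" unfolding g_def[abs_def]
    by (rule Phi_to_inf[OF assms(1,3) top]) (use cq in auto)
  have "((\<lambda>t. Phi p q (c t)) \<longlongrightarrow> Phi p q p) at_bot" by (rule Phi_lim[OF bot]) (use assms(3) in auto)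
  then have g0: "(g \<longlongrightarrow> 0) at_bot" by (simp add: g_def[abs_def] Phi_p)
  define \<alpha> where "\<alpha> = Im (g 0)"
  have m: "\<And>t. g t = \<i> * of_real (\<alpha> * exp t)" unfolding \<alpha>_def by (rule uhp_main[OF ug gi g0])
  have pos: "\<alpha> > 0" using ug unfolding uhp_geo_def \<alpha>_def by auto
  show ?thesis
  proof (intro exI conjI allI)
    show "\<alpha> > 0" by (rule pos)
    fix t
    have "c t = Psi p q (g t)" unfolding g_def using Psi_Phi[OF assms(1,3) cq] by simp
    then show "c t = Psi p q (\<i> * of_real (\<alpha> * exp t))" using m[of t] by simp
  qed
qed

lemma uhp_to_disk: assumes "cmod p = 1" "cmod q = 1" "p \<noteq> q" "uhp_geo g"
  "((\<lambda>t. Psi p q (g t)) \<longlongrightarrow> X) at_top" "((\<lambda>t. Psi p q (g t)) \<longlongrightarrow> Y) at_bot" "cmod X = 1" "cmod Y = 1"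
  shows "hyp_geodesic Y X (\<lambda>t. Psi p q (g t))"
proof -
  have pos: "\<And>t. Im (g t) > 0" using assms(4) unfolding uhp_geo_def by auto
  have disk: "\<And>t. cmod (Psi p q (g t)) < 1" using Psi_disk[OF assms(1-3) pos] .
  have wk: "\<And>t. g t + kk p q \<noteq> 0" using w_kk_nz[OF assms(1-3)] pos less_imp_le by blast
  have "hdist (Psi p q (g s)) (Psi p q (g t)) = \<bar>s - t\<bar>" for s t
    using hdist_Phi[OF assms(1-3) disk disk, of s t] Phi_Psi[OF assms(1,3) wk] assms(4)
    unfolding uhp_geo_def by simp
  then show ?thesis unfolding hyp_geodesic_def using disk assms(5-8) by simp
qed

lemma uhp_geo_exp: "uhp_geo (\<lambda>t. \<i> * of_real (exp t))"
proof -
  have "dH (\<i> * of_real (exp s)) (\<i> * of_real (exp t)) = \<bar>s - t\<bar>" for s t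
  proof -
    have "(cmod (\<i> * of_real (exp s) - \<i> * of_real (exp t)))\<^sup>2 = (exp s - exp t)\<^sup>2"
      by (simp add: norm_mult flip: right_diff_distrib of_real_diff)
    moreover have "1 + (exp s - exp t)\<^sup>2 / (2 * exp s * exp t) = cosh \<bar>s - t\<bar>"
      by (simp only: cosh_real_abs) (simp add: cosh_exp exp_diff exp_minus field_simps power2_eq_square)
    ultimately show ?thesis unfolding dH_def using arcosh_cosh_real[of "\<bar>s - t\<bar>"] by simp
  qed
  then show ?thesis unfolding uhp_geo_def by simp
qed

lemma geo_exists: assumes "cmod p = 1" "cmod q = 1" "p \<noteq> q"
  shows "hyp_geodesic p q (\<lambda>t. Psi p q (\<i> * of_real (exp t)))"
proof (rule uhp_to_disk[OF assms uhp_geo_exp _ _ assms(2,1)])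
  have e: "filterlim (\<lambda>t. complex_of_real (exp t)) at_infinity at_top"
    by (rule filterlim_compose[OF filterlim_of_real_at_infinity exp_at_top])
  have i0: "\<i> \<noteq> 0" by simp
  have f: "filterlim (\<lambda>t. \<i> * complex_of_real (exp t)) at_infinity at_top"
    by (rule tendsto_mult_filterlim_at_infinity[OF tendsto_const i0 e])
  have f2: "filterlim (\<lambda>t. \<i> * complex_of_real (exp t) + kk p q) at_infinity at_top"
    by (rule tendsto_add_filterlim_at_infinity'[OF f tendsto_const])
  have z: "((\<lambda>t. kk p q * (q - p) / (\<i> * complex_of_real (exp t) + kk p q)) \<longlongrightarrow> 0) at_top"
    by (rule tendsto_divide_0[OF tendsto_const f2])
  have wk: "\<And>t. \<i> * complex_of_real (exp t) + kk p q \<noteq> 0"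
    by (rule w_kk_nz[OF assms]) simp
  have l: "((\<lambda>t. q - kk p q * (q - p) / (\<i> * complex_of_real (exp t) + kk p q)) \<longlongrightarrow> q - 0) at_top"
    by (rule tendsto_diff[OF tendsto_const z])
  have eq: "\<And>t. q - kk p q * (q - p) / (\<i> * complex_of_real (exp t) + kk p q) = Psi p q (\<i> * of_real (exp t))"
  proof -
    fix t
    have "q - Psi p q (\<i> * of_real (exp t)) = kk p q * (q - p) / (\<i> * complex_of_real (exp t) + kk p q)"
      by (rule q_minus_Psi[OF wk])
    then show "q - kk p q * (q - p) / (\<i> * complex_of_real (exp t) + kk p q) = Psi p q (\<i> * of_real (exp t))"
      by (simp add: algebra_simps)
  qed
  show "((\<lambda>t. Psi p q (\<i> * of_real (exp t))) \<longlongrightarrow> q) at_top" using l unfolding eq by simp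
next
  have k: "kk p q \<noteq> 0" using kk_nz assms by auto
  have ex: "((\<lambda>t. complex_of_real (exp t)) \<longlongrightarrow> complex_of_real 0) at_bot"
    by (rule tendsto_of_real[OF exp_at_bot])
  have "((\<lambda>t. (q * (\<i> * of_real (exp t)) + p * kk p q) / (\<i> * of_real (exp t) + kk p q)) \<longlongrightarrow>
         (q * (\<i> * of_real 0) + p * kk p q) / (\<i> * of_real 0 + kk p q)) at_bot"
    by (rule tendsto_divide tendsto_add tendsto_mult tendsto_const ex | simp add: k)+
  then show "((\<lambda>t. Psi p q (\<i> * of_real (exp t))) \<longlongrightarrow> p) at_bot" using k unfolding Psi_def by simp
qed

lemma geod_from_q: assumes "cmod p = 1" "cmod q = 1" "p \<noteq> q" "cmod x = 1" "x \<noteq> q" "z \<in> geod q x"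
  shows "Re (Phi p q z) = Phi p q x \<and> cmod z < 1"
proof -
  obtain c t where hc: "hyp_geodesic q x c" and zc: "z = c t" using assms(6) unfolding geod_def by auto
  have disk: "\<And>t. cmod (c t) < 1" and iso: "\<And>s t. hdist (c s) (c t) = \<bar>s - t\<bar>"
    and top: "(c \<longlongrightarrow> x) at_top" and bot: "(c \<longlongrightarrow> q) at_bot"
    using hc unfolding hyp_geodesic_def by auto
  have cq: "c t \<noteq> q" for t
  proof
    assume "c t = q"
    then have "cmod (c t) = 1" using assms(2) by simp
    with disk[of t] show False by simp
  qed
  have xr: "Im (Phi p q x) = 0" by (rule Phi_circle_real[OF assms(1,2,4,5)])
  define X where "X = Re (Phi p q x)"
  have xX: "Phi p q x = of_real X" unfolding X_def using xr by (simp add: complex_eq_iff)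
  define g where "g t = Phi p q (c (- t)) - of_real X" for t
  have ug0: "uhp_geo (\<lambda>t. Phi p q (c t))" unfolding uhp_geo_def
  proof (intro conjI allI)
    fix t show "Im (Phi p q (c t)) > 0" by (rule Phi_Im_pos[OF assms(1-3) disk])
  next
    fix s t
    have "hdist (c s) (c t) = dH (Phi p q (c s)) (Phi p q (c t))" by (rule hdist_Phi[OF assms(1-3) disk disk])
    then show "dH (Phi p q (c s)) (Phi p q (c t)) = \<bar>s - t\<bar>" using iso[of s t] by simp
  qed
  have ug: "uhp_geo g" unfolding g_def[abs_def] using uhp_shift[OF uhp_rev[OF ug0]] by simp
  have bot': "((\<lambda>t. c (- t)) \<longlongrightarrow> q) at_top" using bot by (simp add: filterlim_at_bot_mirror)
  have "filterlim (\<lambda>t. Phi p q (c (- t))) at_infinity at_top"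
    by (rule Phi_to_inf[OF assms(1,3) bot']) (use cq in auto)
  then have gi: "filterlim g at_infinity at_top" unfolding g_def[abs_def]
    by (rule tendsto_add_filterlim_at_infinity'[OF _ tendsto_const, of _ _ "- of_real X", simplified])
  have top': "((\<lambda>t. c (- t)) \<longlongrightarrow> x) at_bot" using top by (simp add: filterlim_at_top_mirror)
  have "((\<lambda>t. Phi p q (c (- t)) - of_real X) \<longlongrightarrow> Phi p q x - of_real X) at_bot"
    by (intro tendsto_intros Phi_lim[OF top' assms(5)])
  then have g0: "(g \<longlongrightarrow> 0) at_bot" by (simp add: g_def[abs_def] xX)
  define \<alpha> where "\<alpha> = Im (g 0)"
  have "g (- t) = \<i> * of_real (\<alpha> * exp (- t))" unfolding \<alpha>_def by (rule uhp_main[OF ug gi g0])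
  then have "Re (g (- t)) = 0" by simp
  then have "Re (Phi p q z) = X" unfolding g_def zc by simp
  then show ?thesis using xX disk zc by simp
qed



lemma Psi_deriv: assumes "w + kk p q \<noteq> 0"
  shows "(Psi p q has_field_derivative kk p q * (q - p) / (w + kk p q)\<^sup>2) (at w)"
proof -
  have "((\<lambda>w. (q * w + p * kk p q) / (w + kk p q)) has_field_derivative
        ((q * 1 + 0) * (w + kk p q) - (q * w + p * kk p q) * (1 + 0)) / ((w + kk p q) * (w + kk p q))) (at w)"
    by (intro DERIV_divide DERIV_add DERIV_cmult DERIV_ident DERIV_const assms)
  moreover have "((q * 1 + 0) * (w + kk p q) - (q * w + p * kk p q) * (1 + 0)) / ((w + kk p q) * (w + kk p q))
     = kk p q * (q - p) / (w + kk p q)\<^sup>2"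
    using assms by (simp add: power2_eq_square algebra_simps)
  ultimately show ?thesis unfolding Psi_def[abs_def] by simp
qed

lemma geo_deriv: assumes "cmod p = 1" "cmod q = 1" "p \<noteq> q" "\<alpha> > 0"
  shows "((\<lambda>t. Psi p q (\<i> * of_real (\<alpha> * exp t))) has_vector_derivative
     (\<i> * of_real (\<alpha> * exp t)) * (kk p q * (q - p) / (\<i> * of_real (\<alpha> * exp t) + kk p q)\<^sup>2)) (at t)"
proof -
  have d1: "((\<lambda>t. of_real (\<alpha> * exp t)) has_vector_derivative of_real (\<alpha> * exp t)) (at t)"
    by (rule has_vector_derivative_of_real) (auto intro!: derivative_eq_intros)
  have d2: "((\<lambda>t. \<i> * of_real (\<alpha> * exp t)) has_vector_derivative \<i> * of_real (\<alpha> * exp t)) (at t)"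
    using has_vector_derivative_mult_right[OF d1, of \<i>] by simp
  have wk: "\<i> * of_real (\<alpha> * exp t) + kk p q \<noteq> 0" by (rule w_kk_nz[OF assms(1-3)]) (use assms(4) in simp)
  have "(Psi p q \<circ> (\<lambda>t. \<i> * of_real (\<alpha> * exp t)) has_vector_derivative
     (\<i> * of_real (\<alpha> * exp t)) * (kk p q * (q - p) / (\<i> * of_real (\<alpha> * exp t) + kk p q)\<^sup>2)) (at t)"
    by (rule field_vector_diff_chain_at[OF d2 Psi_deriv[OF wk]])
  then show ?thesis by (simp add: o_def)
qed

lemma tang_alg: fixes y :: real and a e D C k :: complex
  assumes "D \<noteq> 0" "y \<noteq> 0" "k = \<i> * C * (a - e) / 2"
  shows "(\<i> * of_real y) * (k * (e - a) / D\<^sup>2) = - C * ((\<i> * of_real y) * (e - a) / D)\<^sup>2 / of_real (2 * y)"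
  using assms(1,2) unfolding assms(3) by (simp add: field_simps power2_eq_square)

lemma geo_tangent: assumes "cmod a = 1" "cmod e = 1" "a \<noteq> e" "\<beta> > 0"
  shows "((\<lambda>s. Psi a e (\<i> * of_real (\<beta> * exp s))) has_vector_derivative
     (- cnj a * (Psi a e (\<i> * of_real (\<beta> * exp s)) - a)\<^sup>2 / of_real (2 * \<beta> * exp s))) (at s)"
proof -
  define y where "y = \<beta> * exp s"
  have y: "y > 0" unfolding y_def using assms(4) by simp
  define w where "w = \<i> * of_real y"
  have wk: "w + kk a e \<noteq> 0" unfolding w_def by (rule w_kk_nz[OF assms(1-3)]) (use y in simp)
  have ya: "a * cnj a = 1" by (rule unit_cnj[OF assms(1)])
  have "w * (kk a e * (e - a) / (w + kk a e)\<^sup>2) = - cnj a * (w * (e - a) / (w + kk a e))\<^sup>2 / of_real (2 * y)"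
    unfolding w_def
  proof (rule tang_alg)
    show "\<i> * of_real y + kk a e \<noteq> 0" using wk unfolding w_def .
    show "y \<noteq> 0" using y by simp
    show "kk a e = \<i> * cnj a * (a - e) / 2" by (rule kk_alt[OF assms(1)])
  qed
  then have "w * (kk a e * (e - a) / (w + kk a e)\<^sup>2) = - cnj a * (Psi a e w - a)\<^sup>2 / of_real (2 * y)"
    using Psi_minus_p[OF wk] by simp
  then show ?thesis using geo_deriv[OF assms, of s] unfolding w_def y_def by (simp add: mult.assoc)
qed

lemma Psi_diff: assumes "w1 + kk p q \<noteq> 0" "w2 + kk p q \<noteq> 0"
  shows "Psi p q w1 - Psi p q w2 = kk p q * (q - p) * (w1 - w2) / ((w1 + kk p q) * (w2 + kk p q))"
  unfolding Psi_def using assms by (simp add: field_simps)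

lemma geo_not_loop: assumes "cmod a = 1" "hyp_geodesic a a c" shows False
proof -
  have disk: "\<And>t. cmod (c t) < 1" and iso: "\<And>s t. hdist (c s) (c t) = \<bar>s - t\<bar>"
    and top: "(c \<longlongrightarrow> a) at_top" and bot: "(c \<longlongrightarrow> a) at_bot"
    using assms(2) unfolding hyp_geodesic_def by auto
  have ca: "c t \<noteq> a" for t
  proof
    assume "c t = a"
    then have "cmod (c t) = 1" using assms(1) by simp
    with disk[of t] show False by simp
  qed
  have m1: "cmod (- a) = 1" using assms(1) by simp
  have ne: "- a \<noteq> a"
  proof
    assume h: "- a = a"
    then have "a + a = 0" by (metis add.right_inverse)
    then have "a = 0" by simp
    then show False using assms(1) by simp
  qed
  have ug: "uhp_geo (\<lambda>t. Phi (- a) a (c t))" unfolding uhp_geo_def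
  proof (intro conjI allI)
    fix t show "Im (Phi (- a) a (c t)) > 0" by (rule Phi_Im_pos[OF m1 assms(1) ne disk])
  next
    fix s t
    have "hdist (c s) (c t) = dH (Phi (- a) a (c s)) (Phi (- a) a (c t))" by (rule hdist_Phi[OF m1 assms(1) ne disk disk])
    then show "dH (Phi (- a) a (c s)) (Phi (- a) a (c t)) = \<bar>s - t\<bar>" using iso[of s t] by simp
  qed
  have t1: "filterlim (\<lambda>t. Phi (- a) a (c t)) at_infinity at_top"
    by (rule Phi_to_inf[OF m1 ne top]) (use ca in auto)
  have t2: "filterlim (\<lambda>t. Phi (- a) a (c t)) at_infinity at_bot"
    by (rule Phi_to_inf[OF m1 ne bot]) (use ca in auto)
  show False by (rule uhp_not_both[OF ug t1 t2])
qed


lemma gen_alg: fixes Wc Kc K Q E Ec D Dc M :: complex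
  assumes "D \<noteq> 0" "Dc \<noteq> 0" "E \<noteq> 0" "Ec \<noteq> 0"
  shows "(Wc * Kc / Dc\<^sup>2) * (Q * E / Ec) * (K\<^sup>2 * M\<^sup>2 / (D\<^sup>2 * E\<^sup>2)) = (Kc * K) * (Q * K) * (Wc * M\<^sup>2) / ((Dc * D)\<^sup>2 * (Ec * E))"
  using assms by (simp add: field_simps power2_eq_square)

lemma perp_alg:
  fixes p q k w :: complex and y A :: real
  assumes pP: "p * cnj p = 1" and qQ: "q * cnj q = 1"
    and kdef: "k = \<i> * cnj p * (p - q) / 2" and kc: "cnj k = - \<i> * cnj q * (q - p) / 2"
    and wdef: "w = \<i> * of_real y" and y: "y > 0"
    and wk: "w + k \<noteq> 0" and Ak: "of_real A + k \<noteq> 0" and pq: "p \<noteq> q" and k0: "k \<noteq> 0"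
  shows "\<exists>R>0. Re (cnj (w * (k * (q - p) / (w + k)\<^sup>2)) *
      (cnj ((q * of_real A + p * k) / (of_real A + k)) *
       ((q * w + p * k) / (w + k) - (q * of_real A + p * k) / (of_real A + k))\<^sup>2)) = R * y * (A\<^sup>2 - y\<^sup>2)"
proof -
  define \<kappa> where "\<kappa> = k * (q - p)"
  have h1: "(q * w + p * k) / (w + k) - (q * of_real A + p * k) / (of_real A + k)
            = \<kappa> * (w - of_real A) / ((w + k) * (of_real A + k))"
    unfolding \<kappa>_def using wk Ak by (simp add: field_simps)
  have Akc: "of_real A + cnj k \<noteq> 0" using Ak by (metis complex_cnj_add complex_cnj_complex_of_real complex_cnj_zero_iff)
  have wkc: "cnj (w + k) \<noteq> 0" by (simp only: complex_cnj_zero_iff) (rule wk)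
  have h2: "cnj ((q * of_real A + p * k) / (of_real A + k)) = cnj q * (of_real A + k) / (of_real A + cnj k)"
  proof -
    have "cnj ((q * of_real A + p * k) / (of_real A + k)) = (cnj q * of_real A + cnj p * cnj k) / (of_real A + cnj k)"
      by simp
    also have "cnj q * of_real A + cnj p * cnj k = cnj q * (of_real A + k)"
      unfolding kc by (simp add: kdef algebra_simps)
    finally show ?thesis .
  qed
  have h3: "cnj (w * (k * (q - p) / (w + k)\<^sup>2)) = cnj w * cnj \<kappa> / (cnj (w + k))\<^sup>2"
    unfolding \<kappa>_def by simp
  define X where "X = cnj (w * (k * (q - p) / (w + k)\<^sup>2)) *
      (cnj ((q * of_real A + p * k) / (of_real A + k)) *
       ((q * w + p * k) / (w + k) - (q * of_real A + p * k) / (of_real A + k))\<^sup>2)"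
  have "X = (cnj w * cnj \<kappa> / (cnj (w + k))\<^sup>2) * (cnj q * (of_real A + k) / (of_real A + cnj k)) *
            (\<kappa>\<^sup>2 * (w - of_real A)\<^sup>2 / ((w + k)\<^sup>2 * (of_real A + k)\<^sup>2))"
    unfolding X_def h1 h2 h3 by (simp add: power_mult_distrib power_divide mult.assoc)
  also have "\<dots> = (cnj \<kappa> * \<kappa>) * (cnj q * \<kappa>) * (cnj w * (w - of_real A)\<^sup>2) /
        ((cnj (w + k) * (w + k))\<^sup>2 * ((of_real A + cnj k) * (of_real A + k)))"
    by (rule gen_alg[OF wk wkc Ak Akc])
  also have "cnj \<kappa> * \<kappa> = of_real ((cmod \<kappa>)\<^sup>2)" by (simp add: cmod_sq mult.commute)
  also have "cnj (w + k) * (w + k) = of_real ((cmod (w + k))\<^sup>2)" by (simp add: cmod_sq mult.commute)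
  also have "(of_real A + cnj k) * (of_real A + k) = of_real ((cmod (of_real A + k))\<^sup>2)"
    by (simp add: cmod_sq mult.commute)
  also have "cnj q * \<kappa> = \<i> * of_real ((cmod (q - p))\<^sup>2 / 2)"
  proof -
    have "cnj q * \<kappa> = \<i> * ((q - p) * (cnj q - cnj p)) / 2"
      unfolding \<kappa>_def kdef using pP qQ by (simp add: field_simps) algebra
    then show ?thesis by (simp add: cmod_sq)
  qed
  also have "cnj w * (w - of_real A)\<^sup>2 = - \<i> * of_real y * (w - of_real A)\<^sup>2" unfolding wdef by simp
  finally have X: "X = of_real ((cmod \<kappa>)\<^sup>2 * ((cmod (q - p))\<^sup>2 / 2) * y / (((cmod (w + k))\<^sup>2)\<^sup>2 * (cmod (of_real A + k))\<^sup>2)) * (w - of_real A)\<^sup>2"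
    by (simp add: field_simps)
  define R where "R = (cmod \<kappa>)\<^sup>2 * ((cmod (q - p))\<^sup>2 / 2) / (((cmod (w + k))\<^sup>2)\<^sup>2 * (cmod (of_real A + k))\<^sup>2)"
  have Rpos: "R > 0"
  proof -
    have "cmod \<kappa> > 0" unfolding \<kappa>_def using pq k0 by simp
    moreover have "cmod (q - p) > 0" using pq by simp
    moreover have "cmod (w + k) > 0" using wk by simp
    moreover have "cmod (of_real A + k) > 0" using Ak by simp
    ultimately show ?thesis unfolding R_def by simp
  qed
  have "Re X = R * y * (A\<^sup>2 - y\<^sup>2)" unfolding X R_def wdef by (simp add: power2_eq_square field_simps)
  then show ?thesis using Rpos unfolding X_def by blast
qed


lemma perp_unique: assumes "cmod p = 1" "cmod q = 1" "p \<noteq> q" "cmod a = 1" "a \<noteq> q" "\<alpha> > 0"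
  "perp_foot a (\<lambda>t. Psi p q (\<i> * of_real (\<alpha> * exp t))) t"
  shows "\<alpha> * exp t = \<bar>Re (Phi p q a)\<bar>"
proof -
  define c where "c = (\<lambda>t. Psi p q (\<i> * of_real (\<alpha> * exp t)))"
  obtain e c' u v where hc': "hyp_geodesic a e c'" and c0: "c' 0 = c t"
    and du: "(c has_vector_derivative u) (at t)" and dv: "(c' has_vector_derivative v) (at 0)"
    and nz: "u \<noteq> 0" "v \<noteq> 0" and orth: "Re (cnj u * v) = 0"
    using assms(7) unfolding perp_foot_def c_def by blast
  have e1: "cmod e = 1" using hc' unfolding hyp_geodesic_def by auto
  have ea: "a \<noteq> e" using geo_not_loop[OF assms(4)] hc' by auto
  obtain \<beta> where \<beta>: "\<beta> > 0" and c'eq: "\<forall>s. c' s = Psi a e (\<i> * of_real (\<beta> * exp s))"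
    using geo_char[OF assms(4) e1 ea hc'] by blast
  have c'f: "c' = (\<lambda>s. Psi a e (\<i> * of_real (\<beta> * exp s)))" using c'eq by auto
  have gt: "(c' has_vector_derivative (- cnj a * (c' 0 - a)\<^sup>2 / of_real (2 * \<beta> * exp 0))) (at 0)"
    using geo_tangent[OF assms(4) e1 ea \<beta>, of 0] unfolding c'f by simp
  have "v = - cnj a * (c' 0 - a)\<^sup>2 / of_real (2 * \<beta> * exp 0)"
    by (rule vector_derivative_unique_at[OF dv gt])
  then have vform: "v = of_real (- 1 / (2 * \<beta>)) * (cnj a * (c t - a)\<^sup>2)" using c0 by simp
  define y where "y = \<alpha> * exp t"
  have ypos: "y > 0" unfolding y_def using assms(6) by simp
  define w where "w = \<i> * of_real y"
  have wk: "w + kk p q \<noteq> 0" unfolding w_def by (rule w_kk_nz[OF assms(1-3)]) (use ypos in simp)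
  have uform: "u = w * (kk p q * (q - p) / (w + kk p q)\<^sup>2)"
    using vector_derivative_unique_at[OF du[unfolded c_def] geo_deriv[OF assms(1-3,6)]] unfolding w_def y_def by simp
  define A where "A = Re (Phi p q a)"
  have PhiA: "Phi p q a = of_real A" unfolding A_def using Phi_circle_real[OF assms(1,2,4,5)]
    by (simp add: complex_eq_iff)
  have aA: "a = (q * of_real A + p * kk p q) / (of_real A + kk p q)"
    using Psi_Phi[OF assms(1,3,5)] PhiA unfolding Psi_def by simp
  have Ak: "of_real A + kk p q \<noteq> 0" by (rule w_kk_nz[OF assms(1-3)]) simp
  have ct: "c t = (q * w + p * kk p q) / (w + kk p q)" unfolding c_def w_def y_def Psi_def by simp
  obtain R where R: "R > 0" and RR: "Re (cnj (w * (kk p q * (q - p) / (w + kk p q)\<^sup>2)) *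
      (cnj ((q * of_real A + p * kk p q) / (of_real A + kk p q)) *
       ((q * w + p * kk p q) / (w + kk p q) - (q * of_real A + p * kk p q) / (of_real A + kk p q))\<^sup>2)) = R * y * (A\<^sup>2 - y\<^sup>2)"
    using perp_alg[OF unit_cnj[OF assms(1)] unit_cnj[OF assms(2)] kk_alt[OF assms(1)] kk_cnj[OF assms(2)] w_def ypos wk Ak assms(3) kk_nz[OF assms(1,3)]]
    by blast
  have "Re (cnj u * (cnj a * (c t - a)\<^sup>2)) = R * y * (A\<^sup>2 - y\<^sup>2)"
    using RR unfolding uform ct aA[symmetric] by simp
  moreover have "Re (cnj u * v) = (- 1 / (2 * \<beta>)) * Re (cnj u * (cnj a * (c t - a)\<^sup>2))"
    unfolding vform by simp
  ultimately have "R * y * (A\<^sup>2 - y\<^sup>2) = 0" using orth \<beta> by simp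
  then have "A\<^sup>2 = y\<^sup>2" using R ypos by simp
  then have "sqrt (y\<^sup>2) = sqrt (A\<^sup>2)" by simp
  then have "y = \<bar>A\<bar>" using ypos by simp
  then show ?thesis unfolding y_def A_def .
qed



lemma tanh_alg: fixes C1 C2 S1 S2 r :: real
  assumes "C1 > 0" "C2 > 0" "S1\<^sup>2 = C1\<^sup>2 - 1" "S2\<^sup>2 = C2\<^sup>2 - 1" "r > 0"
  shows "1 + ((r * (S1 / C1) - r * (S2 / C2))\<^sup>2 + (r / C1 - r / C2)\<^sup>2) / (2 * (r / C1) * (r / C2)) = C1 * C2 - S1 * S2"
proof -
  have "1 + ((r * (S1 / C1) - r * (S2 / C2))\<^sup>2 + (r / C1 - r / C2)\<^sup>2) / (2 * (r / C1) * (r / C2))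
      = 1 + ((S1 * C2 - S2 * C1)\<^sup>2 + (C2 - C1)\<^sup>2) / (2 * C1 * C2)"
    using assms by (simp add: field_simps power2_eq_square)
  also have "\<dots> = C1 * C2 - S1 * S2"
    using assms by (simp add: field_simps power2_eq_square) algebra
  finally show ?thesis .
qed

definition semi :: "real \<Rightarrow> real \<Rightarrow> real \<Rightarrow> complex" where
  "semi A \<rho> s = of_real (- A * tanh s) + \<i> * of_real (\<rho> / cosh s)"

lemma semi_Re [simp]: "Re (semi A \<rho> s) = - A * tanh s" unfolding semi_def by simp
lemma semi_Im [simp]: "Im (semi A \<rho> s) = \<rho> / cosh s" unfolding semi_def by simp

lemma uhp_semi: assumes "\<rho> > 0" "\<bar>A\<bar> = \<rho>" shows "uhp_geo (semi A \<rho>)"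
proof -
  have cpos: "\<And>s. cosh (s::real) > 0" by (simp add: cosh_real_pos)
  have "dH (semi A \<rho> s) (semi A \<rho> t) = \<bar>s - t\<bar>" for s t
  proof -
    have n: "(cmod (semi A \<rho> s - semi A \<rho> t))\<^sup>2 = (\<rho> * (sinh s / cosh s) - \<rho> * (sinh t / cosh t))\<^sup>2 + (\<rho> / cosh s - \<rho> / cosh t)\<^sup>2"
    proof -
      have "(cmod (semi A \<rho> s - semi A \<rho> t))\<^sup>2 = (A * tanh t - A * tanh s)\<^sup>2 + (\<rho> / cosh s - \<rho> / cosh t)\<^sup>2"
        by (simp add: cmod_power2)
      also have "(A * tanh t - A * tanh s)\<^sup>2 = (\<rho> * (sinh s / cosh s) - \<rho> * (sinh t / cosh t))\<^sup>2"
      proof -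
        have "(A * tanh t - A * tanh s)\<^sup>2 = A\<^sup>2 * (tanh s - tanh t)\<^sup>2" by (simp add: power2_eq_square algebra_simps)
        also have "A\<^sup>2 = \<rho>\<^sup>2" using assms(2) by (metis power2_abs)
        finally show ?thesis by (simp add: tanh_def power2_eq_square algebra_simps)
      qed
      finally show ?thesis .
    qed
    have "1 + (cmod (semi A \<rho> s - semi A \<rho> t))\<^sup>2 / (2 * Im (semi A \<rho> s) * Im (semi A \<rho> t)) = cosh s * cosh t - sinh s * sinh t"
      unfolding n semi_Im by (rule tanh_alg) (use cpos assms(1) in \<open>simp_all add: sinh_square_eq\<close>)
    also have "\<dots> = cosh \<bar>s - t\<bar>" by (simp add: cosh_diff)
    finally show ?thesis unfolding dH_def using arcosh_cosh_real[of "\<bar>s - t\<bar>"] by simp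
  qed
  moreover have "Im (semi A \<rho> s) > 0" for s using cpos[of s] assms(1) by simp
  ultimately show ?thesis unfolding uhp_geo_def by simp
qed

lemma semi_top: "(semi A \<rho> \<longlongrightarrow> of_real (- A)) at_top"
proof -
  have c: "((\<lambda>s. \<rho> / cosh s) \<longlongrightarrow> 0) at_top"
    by (rule tendsto_divide_0[OF tendsto_const]) (rule filterlim_at_top_imp_at_infinity[OF cosh_real_at_top])
  have "((\<lambda>s. of_real (- A * tanh s) + \<i> * of_real (\<rho> / cosh s)) \<longlongrightarrow> of_real (- A * 1) + \<i> * of_real 0) at_top"
    by (intro tendsto_intros tanh_real_at_top c)
  then show ?thesis unfolding semi_def[abs_def] by simp
qed

lemma semi_bot: "(semi A \<rho> \<longlongrightarrow> of_real A) at_bot"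
proof -
  have c: "((\<lambda>s. \<rho> / cosh s) \<longlongrightarrow> 0) at_bot"
    by (rule tendsto_divide_0[OF tendsto_const]) (rule filterlim_at_top_imp_at_infinity[OF cosh_real_at_bot])
  have "((\<lambda>s. of_real (- A * tanh s) + \<i> * of_real (\<rho> / cosh s)) \<longlongrightarrow> of_real (- A * - 1) + \<i> * of_real 0) at_bot"
    by (intro tendsto_intros tanh_real_at_bot c)
  then show ?thesis unfolding semi_def[abs_def] by simp
qed

lemma semi_deriv: "(semi A \<rho> has_vector_derivative of_real (- A)) (at 0)"
proof -
  have d1: "((\<lambda>s. - A * tanh s) has_real_derivative - A * (1 - tanh 0 ^ 2)) (at 0)"
    by (auto intro!: derivative_eq_intros simp: cosh_real_pos)
  have d2: "((\<lambda>s. \<rho> / cosh s) has_real_derivative - (\<rho> * sinh 0) / (cosh 0 * cosh 0)) (at 0)"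
    by (auto intro!: derivative_eq_intros)
  have "((\<lambda>s. of_real (- A * tanh s) + \<i> * of_real (\<rho> / cosh s)) has_vector_derivative
        of_real (- A * (1 - tanh 0 ^ 2)) + \<i> * of_real (- (\<rho> * sinh 0) / (cosh 0 * cosh 0))) (at 0)"
    by (intro has_vector_derivative_add has_vector_derivative_mult_right has_vector_derivative_of_real d1 d2)
  then show ?thesis unfolding semi_def[abs_def] by simp
qed

lemma semi0: "semi A \<rho> 0 = \<i> * of_real \<rho>" unfolding semi_def by simp

lemma Psi_lim: assumes "(g \<longlongrightarrow> w) F" "w + kk p q \<noteq> 0" shows "((\<lambda>t. Psi p q (g t)) \<longlongrightarrow> Psi p q w) F"
  unfolding Psi_def using assms by (intro tendsto_intros) auto


lemma Psi_zero: assumes "cmod p = 1" "p \<noteq> q" shows "Psi p q 0 = p"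
  using kk_nz[OF assms] unfolding Psi_def by simp

lemma Phi_circle_ofreal: assumes "cmod p = 1" "cmod q = 1" "cmod a = 1" "a \<noteq> q"
  shows "Phi p q a = of_real (Re (Phi p q a))"
  using Phi_circle_real[OF assms] by (simp add: complex_eq_iff)

lemma perp_exists: assumes "cmod p = 1" "cmod q = 1" "p \<noteq> q" "cmod a = 1" "a \<noteq> p" "a \<noteq> q"
  shows "perp_foot a (\<lambda>t. Psi p q (\<i> * of_real (exp t))) (ln \<bar>Re (Phi p q a)\<bar>)"
proof -
  define A where "A = Re (Phi p q a)"
  have PhiA: "Phi p q a = of_real A" unfolding A_def by (rule Phi_circle_ofreal[OF assms(1,2,4,6)])
  have aA: "a = Psi p q (of_real A)" using Psi_Phi[OF assms(1,3,6)] PhiA by simp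
  have A0: "A \<noteq> 0"
  proof
    assume "A = 0"
    then have "a = p" using aA Psi_zero[OF assms(1,3)] by simp
    then show False using assms(5) by simp
  qed
  define \<rho> where "\<rho> = \<bar>A\<bar>"
  have \<rho>: "\<rho> > 0" unfolding \<rho>_def using A0 by simp
  have Ak: "of_real A + kk p q \<noteq> 0" by (rule w_kk_nz[OF assms(1-3)]) simp
  have mAk: "of_real (- A) + kk p q \<noteq> 0" by (rule w_kk_nz[OF assms(1-3)]) simp
  define e where "e = Psi p q (of_real (- A))"
  have e1: "cmod e = 1" unfolding e_def by (rule Psi_circle[OF assms(1-3)]) simp
  define c' where "c' = (\<lambda>s. Psi p q (semi A \<rho> s))"
  have ug: "uhp_geo (semi A \<rho>)" by (rule uhp_semi[OF \<rho>]) (simp add: \<rho>_def)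
  have top: "((\<lambda>t. Psi p q (semi A \<rho> t)) \<longlongrightarrow> e) at_top" unfolding e_def by (rule Psi_lim[OF semi_top mAk])
  have bot: "((\<lambda>t. Psi p q (semi A \<rho> t)) \<longlongrightarrow> a) at_bot" unfolding aA by (rule Psi_lim[OF semi_bot Ak])
  have hc': "hyp_geodesic a e c'" unfolding c'_def by (rule uhp_to_disk[OF assms(1-3) ug top bot e1 assms(4)])
  define w where "w = \<i> * of_real \<rho>"
  have wk: "w + kk p q \<noteq> 0" unfolding w_def by (rule w_kk_nz[OF assms(1-3)]) (use \<rho> in simp)
  define D where "D = kk p q * (q - p) / (w + kk p q)\<^sup>2"
  have D0: "D \<noteq> 0" unfolding D_def using kk_nz[OF assms(1,3)] assms(3) wk by simp
  have er: "exp (ln \<rho>) = \<rho>" using \<rho> by simp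
  have c0: "c' 0 = Psi p q (\<i> * of_real (exp (ln \<rho>)))" unfolding c'_def semi0 er ..
  have du: "((\<lambda>t. Psi p q (\<i> * of_real (exp t))) has_vector_derivative w * D) (at (ln \<rho>))"
    using geo_deriv[OF assms(1-3), of 1 "ln \<rho>"] unfolding D_def w_def er by simp
  have dv0: "(Psi p q \<circ> semi A \<rho> has_vector_derivative of_real (- A) * D) (at 0)"
    unfolding D_def by (rule field_vector_diff_chain_at[OF semi_deriv]) (use Psi_deriv[OF wk] in \<open>simp add: semi0 w_def\<close>)
  have dv: "(c' has_vector_derivative of_real (- A) * D) (at 0)" using dv0 unfolding c'_def by (simp add: o_def)
  have orth: "Re (cnj (w * D) * (of_real (- A) * D)) = 0"
  proof -
    have "cnj (w * D) * (of_real (- A) * D) = \<i> * of_real (\<rho> * A) * (D * cnj D)"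
      unfolding w_def by (simp add: algebra_simps)
    also have "\<dots> = \<i> * of_real (\<rho> * A * (cmod D)\<^sup>2)" by (simp add: cmod_sq[symmetric])
    finally show ?thesis by simp
  qed
  have unz: "w * D \<noteq> 0" using D0 \<rho> unfolding w_def by simp
  have vnz: "of_real (- A) * D \<noteq> 0" using D0 A0 by simp
  show ?thesis unfolding perp_foot_def A_def[symmetric] \<rho>_def[symmetric]
    using hc' c0 du dv unz vnz orth by blast
qed



lemma sfd_value: assumes "cmod p = 1" "cmod q = 1" "p \<noteq> q" "cmod a = 1" "a \<noteq> p" "a \<noteq> q"
  "cmod b = 1" "b \<noteq> p" "b \<noteq> q"
  shows "signed_foot_dist p q a b = ln \<bar>Re (Phi p q b)\<bar> - ln \<bar>Re (Phi p q a)\<bar>"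
  unfolding signed_foot_dist_def
proof (rule the_equality)
  show "\<exists>c t1 t2. hyp_geodesic p q c \<and> perp_foot a c t1 \<and> perp_foot b c t2 \<and>
     ln \<bar>Re (Phi p q b)\<bar> - ln \<bar>Re (Phi p q a)\<bar> = t2 - t1"
    using geo_exists[OF assms(1-3)] perp_exists[OF assms(1-6)] perp_exists[OF assms(1-3,7-9)] by blast
next
  fix s assume "\<exists>c t1 t2. hyp_geodesic p q c \<and> perp_foot a c t1 \<and> perp_foot b c t2 \<and> s = t2 - t1"
  then obtain c t1 t2 where hc: "hyp_geodesic p q c" and pa: "perp_foot a c t1" and pb: "perp_foot b c t2"
    and s: "s = t2 - t1" by blast
  obtain \<alpha> where \<alpha>: "\<alpha> > 0" and ceq: "\<forall>t. c t = Psi p q (\<i> * of_real (\<alpha> * exp t))"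
    using geo_char[OF assms(1-3) hc] by blast
  have cf: "c = (\<lambda>t. Psi p q (\<i> * of_real (\<alpha> * exp t)))" using ceq by auto
  have 1: "\<alpha> * exp t1 = \<bar>Re (Phi p q a)\<bar>" by (rule perp_unique[OF assms(1-4,6) \<alpha> pa[unfolded cf]])
  have 2: "\<alpha> * exp t2 = \<bar>Re (Phi p q b)\<bar>" by (rule perp_unique[OF assms(1-3,7,9) \<alpha> pb[unfolded cf]])
  have "ln \<bar>Re (Phi p q b)\<bar> - ln \<bar>Re (Phi p q a)\<bar> = ln (\<alpha> * exp t2) - ln (\<alpha> * exp t1)" using 1 2 by simp
  also have "\<dots> = t2 - t1" using \<alpha> by (simp add: ln_mult)
  finally show "s = ln \<bar>Re (Phi p q b)\<bar> - ln \<bar>Re (Phi p q a)\<bar>" using s by simp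
qed



lemma inj_incr: assumes "continuous_on {0..1} f" "inj_on f {0..(1::real)}" "(f 0 :: real) < f 1"
  "0 \<le> x" "x < y" "y \<le> 1" shows "f x < f y"
proof -
  have ft: "f 0 < f t \<and> f t < f 1" if "0 < t" "t < 1" for t
    using continuous_inj_imp_mono[OF that assms(1,2)] assms(3) by auto
  show ?thesis
  proof (cases "x = 0")
    case True
    then show ?thesis using ft[of y] assms by (cases "y = 1") auto
  next
    case False
    then have x0: "0 < x" using assms(4) by simp
    show ?thesis
    proof (cases "y = 1")
      case True then show ?thesis using ft[of x] x0 assms by auto
    next
      case False
      then have y1: "y < 1" using assms(6) by simp
      have c: "continuous_on {0..y} f" by (rule continuous_on_subset[OF assms(1)]) (use assms in auto)
      have i: "inj_on f {0..y}" by (rule inj_on_subset[OF assms(2)]) (use assms in auto)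
      have "f 0 < f x \<and> f x < f y \<or> f y < f x \<and> f x < f 0"
        by (rule continuous_inj_imp_mono[OF x0 assms(5) c i])
      then show ?thesis using ft[of y] ft[of x] x0 y1 assms by auto
    qed
  qed
qed

lemma inj_deriv_sign: assumes "continuous_on {0..1} f" "inj_on f {0..(1::real)}" "f 0 < f 1"
  "0 < t" "t < 1" "(f has_real_derivative d) (at t)" shows "d \<ge> 0"
proof -
  have q: "((\<lambda>y. (f y - f t) / (y - t)) \<longlongrightarrow> d) (at t)" using assms(6) by (simp add: has_field_derivative_iff)
  have "eventually (\<lambda>y. y \<in> {0<..<1}) (at t)"
    using assms(4,5) by (intro eventually_at_in_open') auto
  then have "eventually (\<lambda>y. 0 \<le> (f y - f t) / (y - t)) (at t)"
  proof (rule eventually_mono)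
    fix y :: real assume "y \<in> {0<..<1}"
    then have y: "0 < y" "y < 1" by auto
    show "0 \<le> (f y - f t) / (y - t)"
    proof (cases "y < t")
      case True
      then have "f y < f t" using inj_incr[OF assms(1-3), of y t] y assms by auto
      then show ?thesis using True by (simp add: divide_nonpos_neg)
    next
      case False
      then have "t \<le> y" by simp
      then show ?thesis
      proof (cases "t = y")
        case True then show ?thesis by simp
      next
        case False
        then have "t < y" using \<open>t \<le> y\<close> by simp
        then have "f t < f y" using inj_incr[OF assms(1-3), of t y] y assms by auto
        then show ?thesis using \<open>t < y\<close> by simp
      qed
    qed
  qed
  then show ?thesis by (rule tendsto_lowerbound[OF q]) simp
qed

lemma abs_integral: fixes f f' :: "real \<Rightarrow> real"
  assumes "inj_on f {0..1}" "\<And>t. t \<in> {0..1} \<Longrightarrow> (f has_real_derivative f' t) (at t)"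
  shows "((\<lambda>t. \<bar>f' t\<bar>) has_integral \<bar>f 1 - f 0\<bar>) {0..1}"
proof -
  have cont: "continuous_on {0..1} f"
    by (rule continuous_at_imp_continuous_on) (use assms(2) DERIV_isCont in blast)
  have ne: "f 0 \<noteq> f 1" using assms(1) unfolding inj_on_def by force
  have ftc: "(f' has_integral f 1 - f 0) {0..1}"
    by (rule fundamental_theorem_of_calculus)
      (auto simp: has_real_derivative_iff_has_vector_derivative[symmetric] intro!: has_field_derivative_at_within assms(2))
  show ?thesis
  proof (cases "f 0 < f 1")
    case True
    have "((\<lambda>t. \<bar>f' t\<bar>) has_integral f 1 - f 0) {0..1}"
    proof (rule has_integral_spike_finite[OF _ _ ftc, of "{0,1}"])
      fix t :: real assume "t \<in> {0..1} - {0, 1}"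
      then have t: "0 < t" "t < 1" by (auto simp: less_le)
      have "f' t \<ge> 0" by (rule inj_deriv_sign[OF cont assms(1) True t assms(2)]) (use t in auto)
      then show "\<bar>f' t\<bar> = f' t" by simp
    qed simp
    then show ?thesis using True by simp
  next
    case False
    then have lt: "- f 0 < - f 1" using ne by simp
    have cont': "continuous_on {0..1} (\<lambda>x. - f x)" by (intro continuous_intros cont)
    have inj': "inj_on (\<lambda>x. - f x) {0..1}" using assms(1) unfolding inj_on_def by simp
    have ftc': "((\<lambda>t. - f' t) has_integral - (f 1 - f 0)) {0..1}" by (rule has_integral_neg[OF ftc])
    have "((\<lambda>t. \<bar>f' t\<bar>) has_integral - (f 1 - f 0)) {0..1}"
    proof (rule has_integral_spike_finite[OF _ _ ftc', of "{0,1}"])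
      fix t :: real assume "t \<in> {0..1} - {0, 1}"
      then have t: "0 < t" "t < 1" by (auto simp: less_le)
      have d: "((\<lambda>x. - f x) has_real_derivative - f' t) (at t)" using assms(2)[of t] t by (auto intro: DERIV_minus)
      have "- f' t \<ge> 0" by (rule inj_deriv_sign[OF cont' inj' lt t d])
      then show "\<bar>f' t\<bar> = - f' t" by simp
    qed simp
    then show ?thesis using False ne by simp
  qed
qed


lemma Phi_deriv: assumes "z \<noteq> q"
  shows "(Phi p q has_field_derivative kk p q * (q - p) / (q - z)\<^sup>2) (at z)"
proof -
  have "((\<lambda>z. kk p q * (z - p) / (q - z)) has_field_derivative
        ((kk p q * (1 - 0)) * (q - z) - kk p q * (z - p) * (0 - 1)) / ((q - z) * (q - z))) (at z)"
    using assms by (intro DERIV_divide DERIV_cmult DERIV_diff DERIV_ident DERIV_const) auto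
  moreover have "((kk p q * (1 - 0)) * (q - z) - kk p q * (z - p) * (0 - 1)) / ((q - z) * (q - z))
     = kk p q * (q - p) / (q - z)\<^sup>2"
    by (simp add: power2_eq_square algebra_simps)
  ultimately show ?thesis unfolding Phi_def[abs_def] by simp
qed

lemma horo_Im: assumes "cmod p = 1" "cmod q = 1" "0 < r" "r < 1" "z \<in> horocycle q r"
  shows "cmod z < 1 \<and> Im (Phi p q z) = (cmod (q - p))\<^sup>2 * (1 - r) / (4 * r)"
proof -
  have z1: "cmod z < 1" and hz: "cmod (z - of_real (1 - r) * q) = r" using assms(5) unfolding horocycle_def by auto
  have zq: "z \<noteq> q" using z1 assms(2) by auto
  have qQ: "q * cnj q = 1" by (rule unit_cnj[OF assms(2)])
  have "(z - of_real (1 - r) * q) * cnj (z - of_real (1 - r) * q) = of_real (r\<^sup>2)"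
    using hz by (metis cmod_sq of_real_power)
  then have h1: "(z - of_real (1 - r) * q) * (cnj z - of_real (1 - r) * cnj q) = of_real r * of_real r"
    by (simp add: power2_eq_square)
  have "of_real r * (1 - z * cnj z) = of_real (1 - r) * ((q - z) * (cnj q - cnj z))"
    using h1 qQ by (simp add: algebra_simps) algebra
  then have "complex_of_real (r * (1 - (cmod z)\<^sup>2)) = complex_of_real ((1 - r) * (cmod (q - z))\<^sup>2)"
    by (simp add: cmod_sq)
  then have e: "r * (1 - (cmod z)\<^sup>2) = (1 - r) * (cmod (q - z))\<^sup>2" by (simp only: of_real_eq_iff)
  have qz: "(cmod (q - z))\<^sup>2 > 0" using zq by simp
  have "(1 - (cmod z)\<^sup>2) / (cmod (q - z))\<^sup>2 = (1 - r) / r" using e qz assms(3) by (simp add: field_simps)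
  then have "Im (Phi p q z) = (cmod (q - p))\<^sup>2 * ((1 - r) / r) / 4"
    unfolding Phi_Im[OF assms(1,2) zq] by (metis (no_types, lifting) mult.commute times_divide_eq_left divide_divide_eq_left)
  then show ?thesis using z1 by simp
qed


lemma hyp_length_horo: assumes "cmod p = 1" "cmod q = 1" "p \<noteq> q" "arc h" "h C1_differentiable_on {0..1}"
  "\<And>t. t \<in> {0..1} \<Longrightarrow> cmod (h t) < 1" "\<And>t. t \<in> {0..1} \<Longrightarrow> Im (Phi p q (h t)) = Y" "Y > 0"
  shows "hyp_length h = \<bar>Re (Phi p q (h 1)) - Re (Phi p q (h 0))\<bar> / Y"
proof -
  obtain D where D: "\<And>t. t \<in> {0..1} \<Longrightarrow> (h has_vector_derivative D t) (at t)"
    using assms(5) unfolding C1_differentiable_on_def by blast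
  have hq: "h t \<noteq> q" if "t \<in> {0..1}" for t
  proof
    assume "h t = q" then have "cmod (h t) = 1" using assms(2) by simp
    with assms(6)[OF that] show False by simp
  qed
  define P where "P t = kk p q * (q - p) / (q - h t)\<^sup>2" for t
  have dg: "((\<lambda>t. Phi p q (h t)) has_vector_derivative D t * P t) (at t)" if "t \<in> {0..1}" for t
  proof -
    have "(Phi p q \<circ> h has_vector_derivative D t * P t) (at t)"
      unfolding P_def by (rule field_vector_diff_chain_at[OF D[OF that] Phi_deriv[OF hq[OF that]]])
    then show ?thesis by (simp add: o_def)
  qed
  define f where "f t = Re (Phi p q (h t))" for t
  define f' where "f' t = Re (D t * P t)" for t
  have df: "(f has_real_derivative f' t) (at t)" if "t \<in> {0..1}" for t
    unfolding f_def[abs_def] f'_def by (rule has_field_derivative_Re[OF dg[OF that]])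
  have im0: "Im (D t * P t) = 0" if "0 < t" "t < 1" for t
  proof -
    have t01: "t \<in> {0..1}" using that by simp
    have "((\<lambda>t. Im (Phi p q (h t))) has_real_derivative Im (D t * P t)) (at t)"
      using dg[OF t01] by (simp add: has_vector_derivative_complex_iff)
    then have "((\<lambda>t. Y) has_real_derivative Im (D t * P t)) (at t)"
      by (rule has_field_derivative_transform_within_open[of _ _ _ "{0<..<1}"]) (use that assms(7) in auto)
    moreover have "((\<lambda>t. Y) has_real_derivative 0) (at t)" by (rule DERIV_const)
    ultimately show ?thesis by (rule DERIV_unique)
  qed
  have inj: "inj_on f {0..1}"
  proof (rule inj_onI)
    fix s t assume s: "s \<in> {0..1}" and t: "t \<in> {0..1}" and e: "f s = f t"
    have "Phi p q (h s) = Phi p q (h t)" using e assms(7)[OF s] assms(7)[OF t] unfolding f_def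
      by (simp add: complex_eq_iff)
    then have "Psi p q (Phi p q (h s)) = Psi p q (Phi p q (h t))" by simp
    then have "h s = h t" using Psi_Phi[OF assms(1,3) hq[OF s]] Psi_Phi[OF assms(1,3) hq[OF t]] by simp
    then show "s = t" using assms(4) s t unfolding arc_def inj_on_def by blast
  qed
  have AI: "((\<lambda>t. \<bar>f' t\<bar>) has_integral \<bar>f 1 - f 0\<bar>) {0..1}" by (rule abs_integral[OF inj df])
  then have AI2: "((\<lambda>t. \<bar>f' t\<bar> * (1 / Y)) has_integral \<bar>f 1 - f 0\<bar> * (1 / Y)) {0..1}"
    by (rule has_integral_mult_left)
  have "((\<lambda>t. 2 * norm (vector_derivative h (at t)) / (1 - (cmod (h t))\<^sup>2)) has_integral \<bar>f 1 - f 0\<bar> * (1 / Y)) {0..1}"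
  proof (rule has_integral_spike_finite[OF _ _ AI2, of "{0,1}"])
    fix t :: real assume "t \<in> {0..1} - {0, 1}"
    then have t: "0 < t" "t < 1" by (auto simp: less_le)
    have t01: "t \<in> {0..1}" using t by simp
    have vd: "vector_derivative h (at t) = D t" by (rule vector_derivative_at[OF D[OF t01]])
    have a1: "\<bar>f' t\<bar> = cmod (D t * P t)" unfolding f'_def using im0[OF t] by (simp add: cmod_eq_Re)
    have a2: "cmod (P t) = (cmod (q - p))\<^sup>2 / (2 * (cmod (q - h t))\<^sup>2)"
      unfolding P_def by (simp add: norm_mult norm_divide norm_power norm_kk[OF assms(1)] power2_eq_square)
    have a3: "Y = (cmod (q - p))\<^sup>2 * (1 - (cmod (h t))\<^sup>2) / (4 * (cmod (q - h t))\<^sup>2)"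
      using assms(7)[OF t01] Phi_Im[OF assms(1,2) hq[OF t01]] by simp
    have pos: "(cmod (q - p))\<^sup>2 > 0" "(cmod (q - h t))\<^sup>2 > 0" "1 - (cmod (h t))\<^sup>2 > 0"
      using assms(3) hq[OF t01] assms(6)[OF t01] by (auto simp: abs_square_less_1)
    show "2 * norm (vector_derivative h (at t)) / (1 - (cmod (h t))\<^sup>2) = \<bar>f' t\<bar> * (1 / Y)"
      unfolding vd a1 norm_mult a2 a3 using pos by (simp add: field_simps)
  qed simp
  then have "hyp_length h = \<bar>f 1 - f 0\<bar> * (1 / Y)" unfolding hyp_length_def by (rule integral_unique)
  then show ?thesis unfolding f_def by simp
qed



lemma left_excl: assumes "ideal_left v2 v1 a" shows "\<not> ideal_left v1 v2 a"
proof -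
  have e: "cnj (a - v2) * (v1 - v2) + cnj (a - v1) * (v2 - v1) = (v1 - v2) * cnj (v1 - v2)"
    by (simp add: algebra_simps)
  have "Im (cnj (a - v2) * (v1 - v2)) + Im (cnj (a - v1) * (v2 - v1)) = Im ((v1 - v2) * cnj (v1 - v2))"
    unfolding e[symmetric] by simp
  also have "\<dots> = 0" by (simp add: algebra_simps)
  finally show ?thesis using assms unfolding ideal_left_def ccw_def by linarith
qed

lemma horo_len: assumes "cmod p = 1" "cmod q = 1" "p \<noteq> q"
  and arc: "arc h" "h C1_differentiable_on {0..1}"
  and horo: "\<exists>r\<in>{0<..<1}. path_image h \<subseteq> horocycle q r"
  shows "cmod (h 0) < 1 \<and> cmod (h 1) < 1 \<and> Im (Phi p q (h 0)) > 0 \<and> Im (Phi p q (h 1)) = Im (Phi p q (h 0)) \<and>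
    hyp_length h = \<bar>Re (Phi p q (h 1)) - Re (Phi p q (h 0))\<bar> / Im (Phi p q (h 0))"
proof -
  obtain r where r: "0 < r" "r < 1" and hr: "path_image h \<subseteq> horocycle q r" using horo by auto
  define Y where "Y = (cmod (q - p))\<^sup>2 * (1 - r) / (4 * r)"
  have Y: "Y > 0" unfolding Y_def using r assms(3) by simp
  have ht: "cmod (h t) < 1 \<and> Im (Phi p q (h t)) = Y" if "t \<in> {0..1}" for t
  proof -
    have "h t \<in> horocycle q r" using hr that unfolding path_image_def by auto
    then show ?thesis unfolding Y_def by (rule horo_Im[OF assms(1,2) r])
  qed
  have L: "hyp_length h = \<bar>Re (Phi p q (h 1)) - Re (Phi p q (h 0))\<bar> / Y"
    by (rule hyp_length_horo[OF assms(1-3) arc _ _ Y]) (use ht in auto)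
  show ?thesis using L Y ht[of 0] ht[of 1] by simp
qed

lemma geod_Re: assumes "cmod p = 1" "cmod q = 1" "p \<noteq> q" "cmod x = 1" "x \<noteq> q" "z \<in> geod q x"
  shows "Re (Phi p q z) = Re (Phi p q x)"
  using geod_from_q[OF assms] by (metis Re_complex_of_real)


theorem lemmaA2:
  fixes v1 v2 a b :: complex and h1 h2 :: "real \<Rightarrow> complex"
  assumes ideal: "cmod v1 = 1" "cmod v2 = 1" "cmod a = 1" "cmod b = 1"
    and distinct: "distinct [v1, v2, a, b]"
    and opposite: "ideal_left v1 v2 a \<longleftrightarrow> ideal_left v2 v1 b"
    and h1_arc: "arc h1" "h1 C1_differentiable_on {0..1}"
    and h1_horo: "\<exists>r\<in>{0<..<1}. path_image h1 \<subseteq> horocycle v1 r"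
    and h1_ends: "pathstart h1 \<in> geod v1 a" "pathfinish h1 \<in> geod v1 v2"
    and h2_arc: "arc h2" "h2 C1_differentiable_on {0..1}"
    and h2_horo: "\<exists>r\<in>{0<..<1}. path_image h2 \<subseteq> horocycle v2 r"
    and h2_ends: "pathstart h2 = pathfinish h1" "pathfinish h2 \<in> geod v2 b"
  shows "(ideal_left v1 v2 a \<longrightarrow> hyp_length h2 = exp (shear v1 v2 a b) / hyp_length h1) \<and>
         (ideal_left v2 v1 a \<longrightarrow> hyp_length h2 = exp (- shear v1 v2 a b) / hyp_length h1)"
proof -
  have d: "v1 \<noteq> v2" "v2 \<noteq> v1" "a \<noteq> v1" "a \<noteq> v2" "b \<noteq> v1" "b \<noteq> v2" using distinct by auto
  define K where "K = (cmod (v1 - v2))\<^sup>2"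
  have K: "K > 0" unfolding K_def using d by simp
  note L1 = horo_len[OF ideal(2) ideal(1) d(2) h1_arc h1_horo]
  note L2 = horo_len[OF ideal(1) ideal(2) d(1) h2_arc h2_horo]
  define A where "A = Re (Phi v2 v1 a)"
  define Y1 where "Y1 = Im (Phi v2 v1 (h1 0))"
  have Y1: "Y1 > 0" unfolding Y1_def using L1 by simp
  have s1: "Re (Phi v2 v1 (h1 0)) = A" unfolding A_def
    by (rule geod_Re[OF ideal(2) ideal(1) d(2) ideal(3) d(3) h1_ends(1)[unfolded pathstart_def]])
  have f1: "Re (Phi v2 v1 (h1 1)) = 0"
    using geod_Re[OF ideal(2) ideal(1) d(2) ideal(2) d(2) h1_ends(2)[unfolded pathfinish_def]] by (simp add: Phi_p)
  have l1: "hyp_length h1 = \<bar>A\<bar> / Y1" using L1 s1 f1 unfolding Y1_def by simp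
  define z0 where "z0 = h1 1"
  have z0d: "cmod z0 < 1" unfolding z0_def using L1 by simp
  have z0n: "z0 \<noteq> v1" "z0 \<noteq> v2" using z0d ideal(1,2) by auto
  have Pz0: "Phi v2 v1 z0 = \<i> * of_real Y1"
    using f1 L1 unfolding z0_def Y1_def by (simp add: complex_eq_iff)
  have sw0: "Phi v1 v2 z0 * Phi v2 v1 z0 = - of_real K / 4"
    unfolding K_def by (rule Phi_swap[OF ideal(2) ideal(1) z0n(2) z0n(1)])
  have Pz0': "Phi v1 v2 z0 = \<i> * of_real (K / (4 * Y1))"
  proof -
    have e: "Phi v1 v2 z0 * (\<i> * of_real Y1) = - of_real K / 4" using sw0 Pz0 by simp
    have iy: "(\<i> * of_real Y1) * (- \<i> / of_real Y1) = 1" using Y1 by (simp add: field_simps)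
    have "Phi v1 v2 z0 = Phi v1 v2 z0 * ((\<i> * of_real Y1) * (- \<i> / of_real Y1))" using iy by simp
    also have "\<dots> = (Phi v1 v2 z0 * (\<i> * of_real Y1)) * (- \<i> / of_real Y1)" by (simp only: mult.assoc)
    also have "\<dots> = (- of_real K / 4) * (- \<i> / of_real Y1)" unfolding e ..
    also have "\<dots> = \<i> * of_real (K / (4 * Y1))" using Y1 by (simp add: field_simps)
    finally show ?thesis .
  qed
  have h20: "h2 0 = z0" using h2_ends(1) unfolding z0_def pathstart_def pathfinish_def by simp
  define B' where "B' = Re (Phi v1 v2 b)"
  have s2: "Re (Phi v1 v2 (h2 1)) = B'" unfolding B'_def
    by (rule geod_Re[OF ideal(1) ideal(2) d(1) ideal(4) d(6) h2_ends(2)[unfolded pathfinish_def]])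
  have l2: "hyp_length h2 = \<bar>B'\<bar> / (K / (4 * Y1))" using L2 s2 h20 Pz0' by simp
  define A' where "A' = Re (Phi v1 v2 a)"
  define B where "B = Re (Phi v2 v1 b)"
  have ra: "Phi v2 v1 a = of_real A" "Phi v1 v2 a = of_real A'"
    unfolding A_def A'_def by (rule Phi_circle_ofreal; use ideal d in simp)+
  have rb: "Phi v2 v1 b = of_real B" "Phi v1 v2 b = of_real B'"
    unfolding B_def B'_def by (rule Phi_circle_ofreal; use ideal d in simp)+
  have swa: "A' * A = - K / 4"
  proof -
    have "Phi v1 v2 a * Phi v2 v1 a = - of_real K / 4"
      unfolding K_def by (rule Phi_swap[OF ideal(2) ideal(1) d(4) d(3)])
    then have "complex_of_real (A' * A) = complex_of_real (- K / 4)" unfolding ra by simp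
    then show ?thesis by (simp only: of_real_eq_iff)
  qed
  have swb: "B' * B = - K / 4"
  proof -
    have "Phi v1 v2 b * Phi v2 v1 b = - of_real K / 4"
      unfolding K_def by (rule Phi_swap[OF ideal(2) ideal(1) d(6) d(5)])
    then have "complex_of_real (B' * B) = complex_of_real (- K / 4)" unfolding rb by simp
    then show ?thesis by (simp only: of_real_eq_iff)
  qed
  have aa: "\<bar>A'\<bar> * \<bar>A\<bar> = K / 4" using swa K by (metis abs_minus_cancel abs_mult abs_of_pos divide_pos_pos zero_less_numeral minus_divide_left)
  have bb: "\<bar>B'\<bar> * \<bar>B\<bar> = K / 4" using swb K by (metis abs_minus_cancel abs_mult abs_of_pos divide_pos_pos zero_less_numeral minus_divide_left)
  have nz: "\<bar>A\<bar> > 0" "\<bar>A'\<bar> > 0" "\<bar>B\<bar> > 0" "\<bar>B'\<bar> > 0" using swa swb K by auto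
  have sfd1: "signed_foot_dist v1 v2 a b = ln \<bar>B'\<bar> - ln \<bar>A'\<bar>" unfolding A'_def B'_def
    by (rule sfd_value; use ideal d in simp)
  have sfd2: "signed_foot_dist v2 v1 a b = ln \<bar>B\<bar> - ln \<bar>A\<bar>" unfolding A_def B_def
    by (rule sfd_value; use ideal d in simp)
  show ?thesis
  proof (intro conjI impI)
    assume "ideal_left v1 v2 a"
    then have "shear v1 v2 a b = ln \<bar>B'\<bar> - ln \<bar>A'\<bar>" unfolding shear_def sfd1 by simp
    then have E: "exp (shear v1 v2 a b) = \<bar>B'\<bar> / \<bar>A'\<bar>" using nz by (simp add: exp_diff)
    have Kf: "K = 4 * (\<bar>A'\<bar> * \<bar>A\<bar>)" using aa by simp
    show "hyp_length h2 = exp (shear v1 v2 a b) / hyp_length h1"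
      unfolding l1 l2 E Kf using nz Y1 by (simp add: field_simps)
  next
    assume "ideal_left v2 v1 a"
    then have "\<not> ideal_left v1 v2 a" by (rule left_excl)
    then have "shear v1 v2 a b = ln \<bar>B\<bar> - ln \<bar>A\<bar>" unfolding shear_def sfd2 by simp
    then have E: "exp (- shear v1 v2 a b) = \<bar>A\<bar> / \<bar>B\<bar>" using nz by (simp add: exp_diff exp_minus)
    have Kf: "K = 4 * (\<bar>B'\<bar> * \<bar>B\<bar>)" using bb by simp
    show "hyp_length h2 = exp (- shear v1 v2 a b) / hyp_length h1"
      unfolding l1 l2 E Kf using nz Y1 by (simp add: field_simps)
  qed
qed


end
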